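(* Let $P$ be a natural unit interval order on $[n]$ and $G=\mathrm{inc}(P)$. If for some $r$ the induced subgraphs of $G$ on $\{1,2,\dots,r\}$ and on $\{r+1,r+2,\dots,n\}$ are complete graphs, then $X_G(\mathbf{x},t)$ is $e$-positive.
   Context: A natural unit interval order $P(m_1,\dots,m_{n-1})$ is defined for integers $m_1\le\cdots\le m_{n-1}\le n$ with $m_i\ge i$: it is the poset on $[n]$ with $i<_P j$ iff $i<n$ and $j\in\{m_i+1,\dots,n\}$. Its incomparability graph $\mathrm{inc}(P)$ has vertex set $[n]$ and an edge $\{i,j\}$ ($i<j$) iff $j\le m_i$. The chromatic quasisymmetric function of a graph $G$ on $V\subset\mathbb{P}$ is $X_G(\mathbf{x},t)=\sum_\kappa t^{\mathrm{asc}(\kappa)}\prod_v x_{\kappa(v)}$ over proper colorings $\kappa:V\to\mathbb{P}$, with $\mathrm{asc}(\kappa)$ the number of edges $\{i,j\}$, $i<j$, with $\kappa(i)<\kappa(j)$. $X_G(\mathbf{x},t)$ is $e$-positive if, writing $X_G(\mathbf{x},t)=\sum_{\lambda\vdash n}C_\lambda(t)e_\lambda$ in the elementary symmetric function basis, every $C_\lambda(t)$ is a polynomial in $t$ with nonnegative coefficients. *)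

theory Defs
  imports Main "HOL-Library.Multiset" "HOL-Library.FuncSet"
    "HOL-Computational_Algebra.Polynomial"
begin

text \<open>Formal power series in the commuting variables x_1, x_2, ... (indexed by
positive integers) with coefficients in Z[t]: a series is given by its coefficient
function on monomials; a monomial x^alpha is represented by the multiset alpha of
variable indices (with multiplicity = exponent).\<close>

type_synonym qsf = "nat multiset \<Rightarrow> int poly"

text \<open>Natural unit interval order data: m_1 \<le> ... \<le> m_{n-1} \<le> n with m_i \<ge> i.\<close>
definition nuio :: "nat \<Rightarrow> (nat \<Rightarrow> nat) \<Rightarrow> bool" where
  "nuio n m \<longleftrightarrow>
     (\<forall>i. 1 \<le> i \<and> i \<le> n - 1 \<longrightarrow> i \<le> m i \<and> m i \<le> n) \<and>
     (\<forall>i. 1 \<le> i \<and> i + 1 \<le> n - 1 \<longrightarrow> m i \<le> m (i + 1))"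

text \<open>Adjacency of the incomparability graph inc(P(m_1,...,m_{n-1})) on [n]:
{i,j} with i<j is an edge iff j \<le> m_i.\<close>
definition inc_adj :: "(nat \<Rightarrow> nat) \<Rightarrow> nat \<Rightarrow> nat \<Rightarrow> bool" where
  "inc_adj m i j \<longleftrightarrow> (i < j \<and> j \<le> m i) \<or> (j < i \<and> i \<le> m j)"

definition proper_coloring :: "nat set \<Rightarrow> (nat \<Rightarrow> nat \<Rightarrow> bool) \<Rightarrow> (nat \<Rightarrow> nat) \<Rightarrow> bool" where
  "proper_coloring V E \<kappa> \<longleftrightarrow>
     (\<forall>v\<in>V. 0 < \<kappa> v) \<and> (\<forall>i\<in>V. \<forall>j\<in>V. E i j \<longrightarrow> \<kappa> i \<noteq> \<kappa> j)"

definition asc :: "nat set \<Rightarrow> (nat \<Rightarrow> nat \<Rightarrow> bool) \<Rightarrow> (nat \<Rightarrow> nat) \<Rightarrow> nat" where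
  "asc V E \<kappa> = card {(i, j). i \<in> V \<and> j \<in> V \<and> i < j \<and> E i j \<and> \<kappa> i < \<kappa> j}"

text \<open>Chromatic quasisymmetric function X_G(x,t): the coefficient of the monomial
x^alpha is the sum of t^asc(kappa) over proper colourings kappa whose monomial
prod_v x_{kappa(v)} equals x^alpha (colourings taken extensionally on V).\<close>
definition chrom_qsf :: "nat set \<Rightarrow> (nat \<Rightarrow> nat \<Rightarrow> bool) \<Rightarrow> qsf" where
  "chrom_qsf V E \<alpha> =
     (\<Sum>\<kappa> \<in> {\<kappa> \<in> V \<rightarrow>\<^sub>E set_mset \<alpha>. proper_coloring V E \<kappa> \<and>
                    image_mset \<kappa> (mset_set V) = \<alpha>}.
        monom 1 (asc V E \<kappa>))"

definition qsf_mult :: "qsf \<Rightarrow> qsf \<Rightarrow> qsf" where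
  "qsf_mult f g \<alpha> = (\<Sum>\<beta> \<in> {\<beta>. \<beta> \<subseteq># \<alpha>}. f \<beta> * g (\<alpha> - \<beta>))"

definition qsf_one :: qsf where
  "qsf_one \<alpha> = (if \<alpha> = {#} then 1 else 0)"

definition elem_sym :: "nat \<Rightarrow> qsf" where
  "elem_sym k \<alpha> = (if size \<alpha> = k \<and> (\<forall>x. count \<alpha> x \<le> 1) \<and> 0 \<notin># \<alpha> then 1 else 0)"

definition elem_sym_part :: "nat list \<Rightarrow> qsf" where
  "elem_sym_part lam = foldr (\<lambda>k f. qsf_mult (elem_sym k) f) lam qsf_one"

definition partitions :: "nat \<Rightarrow> nat list set" where
  "partitions n = {lam. sum_list lam = n \<and> 0 \<notin> set lam \<and> sorted_wrt (\<ge>) lam}"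

definition e_positive :: "nat \<Rightarrow> qsf \<Rightarrow> bool" where
  "e_positive n X \<longleftrightarrow>
     (\<exists>C :: nat list \<Rightarrow> int poly.
        (\<forall>lam \<in> partitions n. \<forall>i. 0 \<le> coeff (C lam) i) \<and>
        X = (\<lambda>\<alpha>. \<Sum>lam \<in> partitions n. C lam * elem_sym_part lam \<alpha>))"

end

theory Submission
  imports Defs
begin

definition G :: "nat \<Rightarrow> nat \<Rightarrow> nat multiset \<Rightarrow> int poly" where
  "G a b = qsf_mult (elem_sym a) (elem_sym b)"

lemma sub_add_eq: "{\<beta>. \<beta> \<subseteq># add_mset x A} = {\<beta>. \<beta> \<subseteq># A} \<union> add_mset x ` {\<beta>. \<beta> \<subseteq># A}"
proof (intro set_eqI iffI)
  fix \<beta> assume "\<beta> \<in> {\<beta>. \<beta> \<subseteq># add_mset x A}"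
  then have h: "\<beta> \<subseteq># add_mset x A" by simp
  show "\<beta> \<in> {\<beta>. \<beta> \<subseteq># A} \<union> add_mset x ` {\<beta>. \<beta> \<subseteq># A}"
  proof (cases "x \<in># \<beta>")
    case True
    then have "\<beta> = add_mset x (\<beta> - {#x#})" by simp
    moreover have "\<beta> - {#x#} \<subseteq># A" using h True
      by (metis add_mset_remove_trivial mset_subset_eq_add_mset_cancel insert_DiffM)
    ultimately show ?thesis by blast
  next
    case False
    have "\<beta> \<subseteq># A"
      unfolding subseteq_mset_def
    proof
      fix a
      have "count \<beta> a \<le> count (add_mset x A) a" using h by (simp add: subseteq_mset_def)
      then show "count \<beta> a \<le> count A a" using False by (cases "a = x") (auto simp: not_in_iff)
    qed
    then show ?thesis by simp
  qed
next
  fix \<beta> assume "\<beta> \<in> {\<beta>. \<beta> \<subseteq># A} \<union> add_mset x ` {\<beta>. \<beta> \<subseteq># A}"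
  then show "\<beta> \<in> {\<beta>. \<beta> \<subseteq># add_mset x A}"
    by (auto intro: subset_mset.order_trans)
qed

lemma finite_subs: "finite {\<beta>. \<beta> \<subseteq># A}"
  by (induction A) (auto simp: sub_add_eq)

lemma split_rep:
  assumes "c \<notin># A"
  shows "sum f {\<beta>. \<beta> \<subseteq># replicate_mset j c + A} =
    (\<Sum>i\<le>j. \<Sum>\<beta>\<in>{\<beta>. \<beta> \<subseteq># A}. f (replicate_mset i c + \<beta>))"
proof -
  have "(\<Sum>i\<le>j. \<Sum>\<beta>\<in>{\<beta>. \<beta> \<subseteq># A}. f (replicate_mset i c + \<beta>)) =
     (\<Sum>p\<in>Sigma {..j} (\<lambda>_. {\<beta>. \<beta> \<subseteq># A}). f (replicate_mset (fst p) c + snd p))"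
    by (simp add: sum.Sigma finite_subs split_def)
  also have "\<dots> = sum f {\<beta>. \<beta> \<subseteq># replicate_mset j c + A}"
  proof (rule sum.reindex_bij_witness[where i = "\<lambda>\<beta>. (count \<beta> c, filter_mset (\<lambda>x. x \<noteq> c) \<beta>)"
        and j = "\<lambda>p. replicate_mset (fst p) c + snd p"])
    fix p assume p: "p \<in> Sigma {..j} (\<lambda>_. {\<beta>. \<beta> \<subseteq># A})"
    then have "c \<notin># snd p" using assms by (auto dest: mset_subset_eqD)
    then show "(count (replicate_mset (fst p) c + snd p) c, filter_mset (\<lambda>x. x \<noteq> c) (replicate_mset (fst p) c + snd p)) = p"
      by (auto simp: not_in_iff intro!: prod_eqI multiset_eqI)
    show "replicate_mset (fst p) c + snd p \<in> {\<beta>. \<beta> \<subseteq># replicate_mset j c + A}"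
      using p by (auto simp: subseteq_mset_def intro: add_mono)
  next
    fix b assume b: "b \<in> {\<beta>. \<beta> \<subseteq># replicate_mset j c + A}"
    show "replicate_mset (fst (count b c, filter_mset (\<lambda>x. x \<noteq> c) b)) c + snd (count b c, filter_mset (\<lambda>x. x \<noteq> c) b) = b"
      by (auto intro!: multiset_eqI)
    have "count b c \<le> j" using b assms
      by (auto simp: subseteq_mset_def not_in_iff dest!: spec[of _ c])
    moreover have "filter_mset (\<lambda>x. x \<noteq> c) b \<subseteq># A"
      unfolding subseteq_mset_def
    proof
      fix x
      show "count (filter_mset (\<lambda>x. x \<noteq> c) b) x \<le> count A x"
        using b by (cases "x = c") (auto simp: subseteq_mset_def dest!: spec[of _ x])
    qed
    ultimately show "(count b c, filter_mset (\<lambda>x. x \<noteq> c) b) \<in> Sigma {..j} (\<lambda>_. {\<beta>. \<beta> \<subseteq># A})"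
      by auto
  qed simp
  finally show ?thesis by simp
qed

lemma elem_sym_add:
  assumes "c \<notin># \<gamma>" "c \<noteq> 0"
  shows "elem_sym k (add_mset c \<gamma>) = (if k \<ge> 1 then elem_sym (k - 1) \<gamma> else 0)"
proof -
  have e1: "(\<forall>x. count (add_mset c \<gamma>) x \<le> 1) \<longleftrightarrow> (\<forall>x. count \<gamma> x \<le> 1)"
  proof
    assume h: "\<forall>x. count (add_mset c \<gamma>) x \<le> 1"
    show "\<forall>x. count \<gamma> x \<le> 1"
    proof
      fix x have "count \<gamma> x \<le> count (add_mset c \<gamma>) x" by simp
      then show "count \<gamma> x \<le> 1" using h by (meson order_trans)
    qed
  next
    assume h: "\<forall>x. count \<gamma> x \<le> 1"
    show "\<forall>x. count (add_mset c \<gamma>) x \<le> 1"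
    proof
      fix x show "count (add_mset c \<gamma>) x \<le> 1"
        using h assms(1) by (cases "x = c") (simp_all add: not_in_iff)
    qed
  qed
  have e2: "(0 \<notin># add_mset c \<gamma>) \<longleftrightarrow> 0 \<notin># \<gamma>" using assms(2) by simp
  show ?thesis unfolding elem_sym_def using e1 e2 by (cases k) simp_all
qed

lemma elem_sym_two:
  shows "elem_sym k (add_mset c (add_mset c \<gamma>)) = 0"
proof -
  have "count (add_mset c (add_mset c \<gamma>)) c \<ge> 2" by simp
  then have "\<not> (\<forall>x. count (add_mset c (add_mset c \<gamma>)) x \<le> 1)" by (metis Suc_1 not_less_eq_eq)
  then show ?thesis unfolding elem_sym_def by simp
qed

lemma diff_rep:
  assumes "\<beta> \<subseteq># A" "i \<le> j"
  shows "(replicate_mset j c + A) - (replicate_mset i c + \<beta>) = replicate_mset (j - i) c + (A - \<beta>)"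
proof (rule multiset_eqI)
  fix x
  have "count \<beta> x \<le> count A x" using assms(1) by (simp add: subseteq_mset_def)
  then show "count (replicate_mset j c + A - (replicate_mset i c + \<beta>)) x = count (replicate_mset (j - i) c + (A - \<beta>)) x"
    using assms(2) by auto
qed

lemma G_single:
  assumes "c \<notin># A" "c \<noteq> 0"
  shows "G a b (add_mset c A) = (if b \<ge> 1 then G a (b - 1) A else 0) + (if a \<ge> 1 then G (a - 1) b A else 0)"
proof -
  have "G a b (add_mset c A) = (\<Sum>\<beta>\<in>{\<beta>. \<beta> \<subseteq># replicate_mset 1 c + A}. elem_sym a \<beta> * elem_sym b (replicate_mset 1 c + A - \<beta>))"
    by (simp add: G_def qsf_mult_def)
  also have "\<dots> = (\<Sum>i\<le>1. \<Sum>\<beta>\<in>{\<beta>. \<beta> \<subseteq># A}. elem_sym a (replicate_mset i c + \<beta>) * elem_sym b (replicate_mset 1 c + A - (replicate_mset i c + \<beta>)))"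
    by (rule split_rep[OF assms(1)])
  also have "\<dots> = (\<Sum>\<beta>\<in>{\<beta>. \<beta> \<subseteq># A}. elem_sym a \<beta> * elem_sym b (add_mset c (A - \<beta>)))
      + (\<Sum>\<beta>\<in>{\<beta>. \<beta> \<subseteq># A}. elem_sym a (add_mset c \<beta>) * elem_sym b (A - \<beta>))"
  proof -
    have d0: "\<And>\<beta>. \<beta> \<subseteq># A \<Longrightarrow> replicate_mset 1 c + A - (replicate_mset 0 c + \<beta>) = add_mset c (A - \<beta>)"
      using diff_rep[of _ A 0 1 c] by simp
    have d1: "\<And>\<beta>. \<beta> \<subseteq># A \<Longrightarrow> replicate_mset 1 c + A - (replicate_mset 1 c + \<beta>) = A - \<beta>"
      using diff_rep[of _ A 1 1 c] by simp
    have s: "(\<Sum>i\<le>1. f i) = f 0 + f (1::nat)" for f :: "nat \<Rightarrow> int poly"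
      by simp
    have z0: "(\<Sum>\<beta>\<in>{\<beta>. \<beta> \<subseteq># A}. elem_sym a (replicate_mset 0 c + \<beta>) * elem_sym b (replicate_mset 1 c + A - (replicate_mset 0 c + \<beta>)))
       = (\<Sum>\<beta>\<in>{\<beta>. \<beta> \<subseteq># A}. elem_sym a \<beta> * elem_sym b (add_mset c (A - \<beta>)))"
      using d0 by (intro sum.cong) simp_all
    have z1: "(\<Sum>\<beta>\<in>{\<beta>. \<beta> \<subseteq># A}. elem_sym a (replicate_mset 1 c + \<beta>) * elem_sym b (replicate_mset 1 c + A - (replicate_mset 1 c + \<beta>)))
       = (\<Sum>\<beta>\<in>{\<beta>. \<beta> \<subseteq># A}. elem_sym a (add_mset c \<beta>) * elem_sym b (A - \<beta>))"
      using d1 by (intro sum.cong) simp_all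
    show ?thesis unfolding s z0 z1 by simp
  qed
  also have "(\<Sum>\<beta>\<in>{\<beta>. \<beta> \<subseteq># A}. elem_sym a \<beta> * elem_sym b (add_mset c (A - \<beta>)))
      = (if b \<ge> 1 then G a (b - 1) A else 0)"
  proof -
    have "\<And>\<beta>. \<beta> \<subseteq># A \<Longrightarrow> elem_sym b (add_mset c (A - \<beta>)) = (if b \<ge> 1 then elem_sym (b - 1) (A - \<beta>) else 0)"
      using assms by (intro elem_sym_add) (auto dest: in_diffD)
    then show ?thesis by (auto simp: G_def qsf_mult_def intro!: sum.cong)
  qed
  also have "(\<Sum>\<beta>\<in>{\<beta>. \<beta> \<subseteq># A}. elem_sym a (add_mset c \<beta>) * elem_sym b (A - \<beta>))
      = (if a \<ge> 1 then G (a - 1) b A else 0)"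
  proof -
    have "\<And>\<beta>. \<beta> \<subseteq># A \<Longrightarrow> elem_sym a (add_mset c \<beta>) = (if a \<ge> 1 then elem_sym (a - 1) \<beta> else 0)"
      using assms by (intro elem_sym_add) (auto dest: mset_subset_eqD)
    then show ?thesis by (auto simp: G_def qsf_mult_def intro!: sum.cong)
  qed
  finally show ?thesis .
qed

lemma G_double:
  assumes "c \<notin># A" "c \<noteq> 0"
  shows "G a b (add_mset c (add_mset c A)) = (if a \<ge> 1 \<and> b \<ge> 1 then G (a - 1) (b - 1) A else 0)"
proof -
  have r2: "replicate_mset 2 c + A = add_mset c (add_mset c A)" by (simp add: numeral_2_eq_2)
  have "G a b (add_mset c (add_mset c A)) = (\<Sum>\<beta>\<in>{\<beta>. \<beta> \<subseteq># replicate_mset 2 c + A}. elem_sym a \<beta> * elem_sym b (replicate_mset 2 c + A - \<beta>))"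
    by (simp add: G_def qsf_mult_def r2)
  also have "\<dots> = (\<Sum>i\<le>2. \<Sum>\<beta>\<in>{\<beta>. \<beta> \<subseteq># A}. elem_sym a (replicate_mset i c + \<beta>) * elem_sym b (replicate_mset 2 c + A - (replicate_mset i c + \<beta>)))"
    by (rule split_rep[OF assms(1)])
  also have "\<dots> = (\<Sum>\<beta>\<in>{\<beta>. \<beta> \<subseteq># A}. elem_sym a (add_mset c \<beta>) * elem_sym b (add_mset c (A - \<beta>)))"
  proof -
    have d0: "\<And>\<beta>. \<beta> \<subseteq># A \<Longrightarrow> elem_sym b (replicate_mset 2 c + A - (replicate_mset 0 c + \<beta>)) = 0"
      using diff_rep[of _ A 0 2 c] by (simp add: numeral_2_eq_2 elem_sym_two)
    have d1: "\<And>\<beta>. \<beta> \<subseteq># A \<Longrightarrow> replicate_mset 2 c + A - (replicate_mset 1 c + \<beta>) = add_mset c (A - \<beta>)"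
      using diff_rep[of _ A 1 2 c] by (simp add: numeral_2_eq_2)
    have d2: "\<And>\<beta>. elem_sym a (replicate_mset 2 c + \<beta>) = 0"
      by (simp add: numeral_2_eq_2 elem_sym_two)
    have s: "(\<Sum>i\<le>2. f i) = f 0 + f 1 + f (2::nat)" for f :: "nat \<Rightarrow> int poly"
      by (simp add: numeral_2_eq_2)
    have z0: "(\<Sum>\<beta>\<in>{\<beta>. \<beta> \<subseteq># A}. elem_sym a (replicate_mset 0 c + \<beta>) * elem_sym b (replicate_mset 2 c + A - (replicate_mset 0 c + \<beta>))) = 0"
      using d0 by (intro sum.neutral) simp
    have z2: "(\<Sum>\<beta>\<in>{\<beta>. \<beta> \<subseteq># A}. elem_sym a (replicate_mset 2 c + \<beta>) * elem_sym b (replicate_mset 2 c + A - (replicate_mset 2 c + \<beta>))) = 0"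
      using d2 by (intro sum.neutral) simp
    have z1: "(\<Sum>\<beta>\<in>{\<beta>. \<beta> \<subseteq># A}. elem_sym a (replicate_mset 1 c + \<beta>) * elem_sym b (replicate_mset 2 c + A - (replicate_mset 1 c + \<beta>)))
       = (\<Sum>\<beta>\<in>{\<beta>. \<beta> \<subseteq># A}. elem_sym a (add_mset c \<beta>) * elem_sym b (add_mset c (A - \<beta>)))"
      using d1 by (intro sum.cong) simp_all
    show ?thesis unfolding s z0 z1 z2 by simp
  qed
  also have "\<dots> = (if a \<ge> 1 \<and> b \<ge> 1 then G (a - 1) (b - 1) A else 0)"
  proof -
    have "\<And>\<beta>. \<beta> \<subseteq># A \<Longrightarrow> elem_sym b (add_mset c (A - \<beta>)) = (if b \<ge> 1 then elem_sym (b - 1) (A - \<beta>) else 0)"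
      using assms by (intro elem_sym_add) (auto dest: in_diffD)
    moreover have "\<And>\<beta>. \<beta> \<subseteq># A \<Longrightarrow> elem_sym a (add_mset c \<beta>) = (if a \<ge> 1 then elem_sym (a - 1) \<beta> else 0)"
      using assms by (intro elem_sym_add) (auto dest: mset_subset_eqD)
    ultimately show ?thesis by (auto simp: G_def qsf_mult_def intro!: sum.cong)
  qed
  finally show ?thesis .
qed

lemma G_sym: "G a b \<alpha> = G b a \<alpha>"
  unfolding G_def qsf_mult_def
  by (rule sum.reindex_bij_witness[where i = "\<lambda>\<beta>. \<alpha> - \<beta>" and j = "\<lambda>\<beta>. \<alpha> - \<beta>"])
    (auto simp: subset_mset.diff_diff_right mult.commute)

lemma G_size: "size \<alpha> \<noteq> a + b \<Longrightarrow> G a b \<alpha> = 0"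
  unfolding G_def qsf_mult_def
proof (rule sum.neutral, rule ballI)
  fix \<beta> assume s: "size \<alpha> \<noteq> a + b" and b: "\<beta> \<in> {\<beta>. \<beta> \<subseteq># \<alpha>}"
  then have "size \<alpha> = size \<beta> + size (\<alpha> - \<beta>)" by (simp add: size_Diff_submset size_mset_mono)
  then show "elem_sym a \<beta> * elem_sym b (\<alpha> - \<beta>) = 0" using s by (auto simp: elem_sym_def)
qed

lemma G_zero: "0 \<in># \<alpha> \<Longrightarrow> G a b \<alpha> = 0"
  unfolding G_def qsf_mult_def
proof (rule sum.neutral, rule ballI)
  fix \<beta> assume z: "0 \<in># \<alpha>" and b: "\<beta> \<in> {\<beta>. \<beta> \<subseteq># \<alpha>}"
  have "count \<alpha> 0 = count \<beta> 0 + count (\<alpha> - \<beta>) 0"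
    using b by (simp add: subseteq_mset_def)
  moreover have "count \<alpha> 0 > 0" using z by simp
  ultimately have "count \<beta> 0 > 0 \<or> count (\<alpha> - \<beta>) 0 > 0" by linarith
  then have "0 \<in># \<beta> \<or> 0 \<in># \<alpha> - \<beta>" by (simp only: count_greater_zero_iff)
  then show "elem_sym a \<beta> * elem_sym b (\<alpha> - \<beta>) = 0" unfolding elem_sym_def by auto
qed

lemma G_three: "count \<alpha> c \<ge> 3 \<Longrightarrow> G a b \<alpha> = 0"
  unfolding G_def qsf_mult_def
proof (rule sum.neutral, rule ballI)
  fix \<beta> assume z: "count \<alpha> c \<ge> 3" and b: "\<beta> \<in> {\<beta>. \<beta> \<subseteq># \<alpha>}"
  then have "count \<alpha> c = count \<beta> c + count (\<alpha> - \<beta>) c"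
    by (simp add: subseteq_mset_def)
  then have "count \<beta> c > 1 \<or> count (\<alpha> - \<beta>) c > 1" using z by linarith
  then have "\<not> (\<forall>x. count \<beta> x \<le> 1) \<or> \<not> (\<forall>x. count (\<alpha> - \<beta>) x \<le> 1)"
    using not_le by blast
  then show "elem_sym a \<beta> * elem_sym b (\<alpha> - \<beta>) = 0" unfolding elem_sym_def by auto
qed

lemma G_empty: "G 0 0 {#} = 1"
proof -
  have "{\<beta>. \<beta> \<subseteq># ({#}::nat multiset)} = {{#}}" by auto
  then show ?thesis by (simp add: G_def qsf_mult_def elem_sym_def)
qed

definition dg :: "(nat \<Rightarrow> nat \<Rightarrow> bool) \<Rightarrow> nat set \<Rightarrow> nat \<Rightarrow> nat" where
  "dg adj W v = card {u \<in> W. u < v \<and> adj u v}"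

definition NE :: "(nat \<Rightarrow> nat \<Rightarrow> bool) \<Rightarrow> nat set \<Rightarrow> (nat \<times> nat) set" where
  "NE adj W = {p. fst p \<in> W \<and> snd p \<in> W \<and> fst p < snd p \<and> \<not> adj (fst p) (snd p)}"

fun okx :: "(nat \<Rightarrow> nat \<Rightarrow> bool) \<Rightarrow> nat option \<Rightarrow> nat \<Rightarrow> bool" where
  "okx adj None v = True"
| "okx adj (Some x) v = (\<not> (x < v \<and> \<not> adj x v))"

definition cnd :: "(nat \<Rightarrow> nat \<Rightarrow> bool) \<Rightarrow> nat set \<Rightarrow> nat \<Rightarrow> bool" where
  "cnd adj W v = (W = {v} \<or> (\<exists>u\<in>W. adj v u))"

fun Qf :: "(nat \<Rightarrow> nat \<Rightarrow> bool) \<Rightarrow> nat \<Rightarrow> nat set \<Rightarrow> nat option \<Rightarrow> int poly" where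
  "Qf adj 0 W x = 1"
| "Qf adj (Suc n) W x = (\<Sum>v\<in>{v\<in>W. okx adj x v \<and> cnd adj W v}. monom 1 (dg adj W v) * Qf adj n (W - {v}) (Some v))"

definition Q :: "(nat \<Rightarrow> nat \<Rightarrow> bool) \<Rightarrow> nat set \<Rightarrow> nat option \<Rightarrow> int poly" where
  "Q adj W x = Qf adj (card W) W x"

fun Cf :: "(nat \<Rightarrow> nat \<Rightarrow> bool) \<Rightarrow> nat \<Rightarrow> nat set \<Rightarrow> int poly" where
  "Cf adj 0 W = Q adj W None"
| "Cf adj (Suc k) W = (\<Sum>p\<in>NE adj W. monom 1 (dg adj W (fst p) + dg adj W (snd p)) * Cf adj k (W - {fst p, snd p}))"

definition D :: "(nat \<Rightarrow> nat \<Rightarrow> bool) \<Rightarrow> nat \<Rightarrow> nat set \<Rightarrow> int poly" where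
  "D adj k W = (\<Sum>v\<in>W. monom 1 (dg adj W v) * Cf adj k (W - {v}))"

lemma mono_mult: "monom (1::int) a * monom 1 b = monom 1 (a + b)"
  by (simp add: mult_monom)

lemma mono_mult2: "monom (1::int) a * (monom 1 b * x) = monom 1 (a + b) * x"
  by (simp add: mult_monom flip: mult.assoc)

lemma Q_empty: "Q adj {} x = 1"
  by (simp add: Q_def)

lemma Q_unfold:
  assumes "finite W" "W \<noteq> {}"
  shows "Q adj W x = (\<Sum>v\<in>{v\<in>W. okx adj x v \<and> cnd adj W v}. monom 1 (dg adj W v) * Q adj (W - {v}) (Some v))"
proof -
  obtain n where n: "card W = Suc n" using assms by (metis card_0_eq not0_implies_Suc)
  have "\<And>v. v \<in> W \<Longrightarrow> card (W - {v}) = n" using n assms by simp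
  then show ?thesis unfolding Q_def n by (auto intro!: sum.cong)
qed

lemma Q_none:
  assumes "finite U" "\<forall>u\<in>U. okx adj (Some w) u"
  shows "Q adj U (Some w) = Q adj U None"
proof (cases "U = {}")
  case True then show ?thesis by (simp add: Q_empty)
next
  case False
  have "{v\<in>U. okx adj (Some w) v \<and> cnd adj U v} = {v\<in>U. okx adj None v \<and> cnd adj U v}"
    using assms(2) by auto
  then show ?thesis using Q_unfold[OF assms(1) False] by simp
qed

lemma dg_remove:
  assumes "finite W" "v \<noteq> x"
  shows "dg adj W x = dg adj (W - {v}) x + (if v \<in> W \<and> v < x \<and> adj v x then 1 else 0)"
proof (cases "v \<in> W \<and> v < x \<and> adj v x")
  case True
  then have "{u \<in> W. u < x \<and> adj u x} = insert v {u \<in> W - {v}. u < x \<and> adj u x}" by auto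
  then show ?thesis using True assms by (simp add: dg_def)
next
  case False
  then have "{u \<in> W. u < x \<and> adj u x} = {u \<in> W - {v}. u < x \<and> adj u x}" by auto
  then show ?thesis using False by (simp add: dg_def)
qed

lemma NE_remove: "NE adj (W - {v}) = {p \<in> NE adj W. fst p \<noteq> v \<and> snd p \<noteq> v}"
  by (auto simp: NE_def)

lemma finite_NE: "finite W \<Longrightarrow> finite (NE adj W)"
  by (rule finite_subset[of _ "W \<times> W"]) (auto simp: NE_def)

lemma Cf_vanish: "finite W \<Longrightarrow> card W < 2 * k \<Longrightarrow> Cf adj k W = 0"
proof (induction k arbitrary: W)
  case 0 then show ?case by simp
next
  case (Suc k)
  have "\<And>p. p \<in> NE adj W \<Longrightarrow> Cf adj k (W - {fst p, snd p}) = 0"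
  proof -
    fix p assume p: "p \<in> NE adj W"
    then have "card (W - {fst p, snd p}) = card W - 2" using Suc.prems(1)
      by (auto simp: NE_def card_Diff_subset)
    moreover have "finite (W - {fst p, snd p})" using Suc.prems(1) by simp
    moreover have "card W \<ge> 2"
    proof -
      have "{fst p, snd p} \<subseteq> W" "card {fst p, snd p} = 2" using p by (auto simp: NE_def)
      then show ?thesis using Suc.prems(1) by (metis card_mono)
    qed
    then have "card W - 2 < 2 * k" using Suc.prems(2) by simp
    ultimately show "Cf adj k (W - {fst p, snd p}) = 0" using Suc.IH by simp
  qed
  then show ?case by simp
qed

lemma D_vanish: "finite W \<Longrightarrow> card W < 2 * k + 1 \<Longrightarrow> D adj k W = 0"
proof -
  assume a: "finite W" "card W < 2 * k + 1"
  have "\<And>v. v \<in> W \<Longrightarrow> Cf adj k (W - {v}) = 0"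
  proof -
    fix v assume "v \<in> W"
    then have "card W > 0" using a card_gt_0_iff by blast
    then have "card (W - {v}) < 2 * k" using a \<open>v \<in> W\<close> by simp
    then show "Cf adj k (W - {v}) = 0" using a by (intro Cf_vanish) simp_all
  qed
  then show ?thesis unfolding D_def by simp
qed

lemma sum_split: "finite A \<Longrightarrow> sum f A = sum f {x\<in>A. P x} + sum f {x\<in>A. \<not> P x}"
proof -
  assume "finite A"
  moreover have "A = {x\<in>A. P x} \<union> {x\<in>A. \<not> P x}" by auto
  ultimately show ?thesis by (metis (no_types, lifting) sum.union_disjoint finite_Un disjoint_iff mem_Collect_eq)
qed

locale cob =
  fixes adj :: "nat \<Rightarrow> nat \<Rightarrow> bool" and V :: "nat set"
  assumes finV: "finite V"
    and sym: "\<And>a b. adj a b = adj b a"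
    and irr: "\<And>a. \<not> adj a a"
    and P1: "\<And>a b c. a \<in> V \<Longrightarrow> b \<in> V \<Longrightarrow> c \<in> V \<Longrightarrow> a < b \<Longrightarrow> b < c \<Longrightarrow> adj a c \<Longrightarrow> adj a b \<and> adj b c"
    and P2: "\<And>a b c. a \<in> V \<Longrightarrow> b \<in> V \<Longrightarrow> c \<in> V \<Longrightarrow> a \<noteq> b \<Longrightarrow> a \<noteq> c \<Longrightarrow> b \<noteq> c \<Longrightarrow> adj a b \<or> adj a c \<or> adj b c"
begin

lemma top_ok:
  assumes "W \<subseteq> V" "(a, b) \<in> NE adj W" "u \<in> W"
  shows "okx adj (Some b) u"
proof (rule ccontr)
  assume "\<not> okx adj (Some b) u"
  then have bu: "b < u" "\<not> adj b u" by auto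
  have ab: "a < b" "\<not> adj a b" "a \<in> W" "b \<in> W" using assms(2) by (auto simp: NE_def)
  have "\<not> adj a u" using P1[of a b u] ab bu assms by auto
  then show False using P2[of a b u] ab bu assms sym by auto
qed

lemma iso_dg: "(\<forall>u\<in>W. \<not> adj z u) \<Longrightarrow> dg adj W z = 0"
  unfolding dg_def using sym by auto

lemma iso_Q:
  assumes W: "W \<subseteq> V" "card W \<ge> 3" and z: "z \<in> W" "\<forall>u\<in>W. \<not> adj z u"
  shows "Q adj (W - {z}) (Some z) = (\<Sum>v\<in>{v\<in>W. v < z}. monom 1 (dg adj W v) * Q adj (W - {v, z}) None)"
proof -
  have fW: "finite W" using W finV finite_subset by blast
  have c2: "card (W - {z}) \<ge> 2" using W z fW by simp
  then have ne: "W - {z} \<noteq> {}" by (metis card.empty not_numeral_le_zero)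
  have clique: "\<And>u v. u \<in> W \<Longrightarrow> v \<in> W \<Longrightarrow> u \<noteq> z \<Longrightarrow> v \<noteq> z \<Longrightarrow> u \<noteq> v \<Longrightarrow> adj u v"
    using P2 z W sym by blast
  have set_eq: "{v\<in>W - {z}. okx adj (Some z) v \<and> cnd adj (W - {z}) v} = {v\<in>W. v < z}"
  proof (intro set_eqI iffI)
    fix v assume v: "v \<in> {v\<in>W - {z}. okx adj (Some z) v \<and> cnd adj (W - {z}) v}"
    then show "v \<in> {v\<in>W. v < z}" using z by (auto simp: linorder_neq_iff)
  next
    fix v assume v: "v \<in> {v\<in>W. v < z}"
    have "v \<in> W - {z}" using v by auto
    then have "card (W - {z} - {v}) \<ge> 1" using c2 fW by simp
    then have "W - {z} - {v} \<noteq> {}" by (metis card.empty not_one_le_zero)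
    then obtain u where u: "u \<in> W - {z}" "u \<noteq> v" by blast
    have "adj v u" using clique u v by auto
    then have "cnd adj (W - {z}) v" using u unfolding cnd_def by blast
    then show "v \<in> {v\<in>W - {z}. okx adj (Some z) v \<and> cnd adj (W - {z}) v}" using v by auto
  qed
  have "Q adj (W - {z}) (Some z) = (\<Sum>v\<in>{v\<in>W. v < z}. monom 1 (dg adj (W - {z}) v) * Q adj (W - {z} - {v}) (Some v))"
    using Q_unfold[of "W - {z}" adj "Some z"] fW ne set_eq by simp
  also have "\<dots> = (\<Sum>v\<in>{v\<in>W. v < z}. monom 1 (dg adj W v) * Q adj (W - {v, z}) None)"
  proof (rule sum.cong)
    fix v assume v: "v \<in> {v\<in>W. v < z}"
    have "dg adj W v = dg adj (W - {z}) v" using dg_remove[of W z v adj] fW v z sym by auto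
    moreover have "Q adj (W - {z} - {v}) (Some v) = Q adj (W - {z} - {v}) None"
      using clique v by (intro Q_none) (auto simp: fW)
    moreover have "W - {z} - {v} = W - {v, z}" by auto
    ultimately show "monom 1 (dg adj (W - {z}) v) * Q adj (W - {z} - {v}) (Some v) = monom 1 (dg adj W v) * Q adj (W - {v, z}) None"
      by simp
  qed simp
  finally show ?thesis .
qed

lemma R1_0:
  assumes W: "W \<subseteq> V" "W \<noteq> {}"
  shows "D adj 0 W = Cf adj 0 W + Cf adj 1 W + (if card W = 2 then Cf adj 1 W else 0)"
proof -
  have fW: "finite W" using W finV finite_subset by blast
  define F where "F p = monom 1 (dg adj W (fst p) + dg adj W (snd p)) * Q adj (W - {fst p, snd p}) None" for p
  have C1: "Cf adj 1 W = (\<Sum>p\<in>NE adj W. F p)" by (simp add: F_def)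
  have cW: "card W \<ge> 1" using W fW by (simp add: Suc_leI card_gt_0_iff)
  show ?thesis
  proof (cases "card W = 1")
    case True
    then obtain v where v: "W = {v}" by (metis card_1_singletonE)
    have dg0: "dg adj {v} v = 0" by (simp add: dg_def)
    have "NE adj {v} = {}" by (auto simp: NE_def)
    moreover have "Q adj {v} None = 1"
    proof -
      have "{v'\<in>{v}. okx adj None v' \<and> cnd adj {v} v'} = {v}" by (auto simp: cnd_def)
      then show ?thesis using Q_unfold[of "{v}" adj None] dg0 by (simp add: Q_empty)
    qed
    ultimately show ?thesis using v dg0 by (simp add: D_def Q_empty)
  next
    case False
    then have c2: "card W \<ge> 2" using cW by linarith
    have step1: "Q adj (W - {v}) None = Q adj (W - {v}) (Some v)
        + (\<Sum>w\<in>{w\<in>W - {v}. v < w \<and> \<not> adj v w \<and> cnd adj (W - {v}) w}. monom 1 (dg adj W w) * Q adj (W - {v, w}) None)"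
      if v: "v \<in> W" for v
    proof -
      have "card (W - {v}) \<ge> 1" using c2 v fW by simp
      then have ne: "W - {v} \<noteq> {}" by (metis card.empty not_one_le_zero)
      let ?f = "\<lambda>w. monom 1 (dg adj (W - {v}) w) * Q adj (W - {v} - {w}) (Some w)"
      have fin: "finite (W - {v})" using fW by simp
      have "Q adj (W - {v}) None = sum ?f {w\<in>W - {v}. okx adj None w \<and> cnd adj (W - {v}) w}"
        by (rule Q_unfold[OF fin ne])
      also have "\<dots> = sum ?f {w\<in>{w\<in>W - {v}. cnd adj (W - {v}) w}. okx adj (Some v) w}
          + sum ?f {w\<in>{w\<in>W - {v}. cnd adj (W - {v}) w}. \<not> okx adj (Some v) w}"
        using fW by (intro trans[OF _ sum_split]) simp_all
      also have "sum ?f {w\<in>{w\<in>W - {v}. cnd adj (W - {v}) w}. okx adj (Some v) w} = Q adj (W - {v}) (Some v)"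
      proof -
        have fin: "finite (W - {v})" using fW by simp
        have "{w\<in>{w\<in>W - {v}. cnd adj (W - {v}) w}. okx adj (Some v) w} = {w\<in>W - {v}. okx adj (Some v) w \<and> cnd adj (W - {v}) w}"
          by blast
        then show ?thesis using Q_unfold[OF fin ne, of adj "Some v"] by (simp only:)
      qed
      also have "sum ?f {w\<in>{w\<in>W - {v}. cnd adj (W - {v}) w}. \<not> okx adj (Some v) w}
         = (\<Sum>w\<in>{w\<in>W - {v}. v < w \<and> \<not> adj v w \<and> cnd adj (W - {v}) w}. monom 1 (dg adj W w) * Q adj (W - {v, w}) None)"
      proof (rule sum.cong)
        show "{w\<in>{w\<in>W - {v}. cnd adj (W - {v}) w}. \<not> okx adj (Some v) w} = {w\<in>W - {v}. v < w \<and> \<not> adj v w \<and> cnd adj (W - {v}) w}"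
          by auto
      next
        fix w assume w: "w \<in> {w\<in>W - {v}. v < w \<and> \<not> adj v w \<and> cnd adj (W - {v}) w}"
        then have vw: "(v, w) \<in> NE adj W" using v by (simp add: NE_def)
        have "dg adj W w = dg adj (W - {v}) w" using dg_remove[of W v w adj] fW w by auto
        moreover have "Q adj (W - {v} - {w}) (Some w) = Q adj (W - {v} - {w}) None"
          using top_ok[OF W(1) vw] fW by (intro Q_none) auto
        moreover have "W - {v} - {w} = W - {v, w}" by auto
        ultimately show "?f w = monom 1 (dg adj W w) * Q adj (W - {v, w}) None" by simp
      qed
      finally show ?thesis .
    qed
    define ISO where "ISO = (\<Sum>v\<in>{v\<in>W. \<not> (\<exists>u\<in>W. adj v u)}. monom 1 (dg adj W v) * Q adj (W - {v}) (Some v))"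
    have C0W: "Q adj W None = (\<Sum>v\<in>{v\<in>W. \<exists>u\<in>W. adj v u}. monom 1 (dg adj W v) * Q adj (W - {v}) (Some v))"
    proof -
      have "{v\<in>W. okx adj None v \<and> cnd adj W v} = {v\<in>W. \<exists>u\<in>W. adj v u}"
        using c2 by (auto simp: cnd_def)
      then show ?thesis using Q_unfold[OF fW W(2), of adj None] by simp
    qed
    have A1: "(\<Sum>v\<in>W. monom 1 (dg adj W v) * Q adj (W - {v}) (Some v)) = Q adj W None + ISO"
      unfolding C0W ISO_def using fW by (rule sum_split)
    define B where "B v = {w\<in>W - {v}. v < w \<and> \<not> adj v w \<and> cnd adj (W - {v}) w}" for v
    have DS: "(\<Sum>v\<in>W. monom 1 (dg adj W v) * (\<Sum>w\<in>B v. monom 1 (dg adj W w) * Q adj (W - {v, w}) None))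
        = (\<Sum>p\<in>{p\<in>NE adj W. cnd adj (W - {fst p}) (snd p)}. F p)"
    proof -
      have "(\<Sum>v\<in>W. monom 1 (dg adj W v) * (\<Sum>w\<in>B v. monom 1 (dg adj W w) * Q adj (W - {v, w}) None))
          = (\<Sum>v\<in>W. \<Sum>w\<in>B v. F (v, w))"
        by (simp add: F_def sum_distrib_left mult_monom flip: mult.assoc)
      also have "\<dots> = (\<Sum>(v, w)\<in>Sigma W B. F (v, w))"
      proof (rule sum.Sigma[OF fW])
        show "\<forall>v\<in>W. finite (B v)" using fW by (auto simp: B_def)
      qed
      also have "\<dots> = (\<Sum>p\<in>Sigma W B. F p)" by simp
      also have "Sigma W B = {p\<in>NE adj W. cnd adj (W - {fst p}) (snd p)}"
        by (auto simp: B_def NE_def)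
      finally show ?thesis .
    qed
    define NC where "NC = (\<Sum>p\<in>{p\<in>NE adj W. \<not> cnd adj (W - {fst p}) (snd p)}. F p)"
    have C1split: "Cf adj 1 W = (\<Sum>p\<in>{p\<in>NE adj W. cnd adj (W - {fst p}) (snd p)}. F p) + NC"
      unfolding C1 NC_def using finite_NE[OF fW] by (rule sum_split)
    have LHS: "D adj 0 W = Q adj W None + ISO + (\<Sum>p\<in>{p\<in>NE adj W. cnd adj (W - {fst p}) (snd p)}. F p)"
    proof -
      have "D adj 0 W = (\<Sum>v\<in>W. monom 1 (dg adj W v) * Q adj (W - {v}) None)" by (simp add: D_def)
      also have "\<dots> = (\<Sum>v\<in>W. monom 1 (dg adj W v) * Q adj (W - {v}) (Some v)
           + monom 1 (dg adj W v) * (\<Sum>w\<in>B v. monom 1 (dg adj W w) * Q adj (W - {v, w}) None))"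
        by (intro sum.cong) (simp_all add: step1 B_def distrib_left)
      also have "\<dots> = Q adj W None + ISO + (\<Sum>p\<in>{p\<in>NE adj W. cnd adj (W - {fst p}) (snd p)}. F p)"
        unfolding sum.distrib A1 DS by simp
      finally show ?thesis .
    qed
    have key: "ISO = NC + (if card W = 2 then Cf adj 1 W else 0)"
    proof (cases "card W = 2")
      case True
      then obtain a b where ab: "W = {a, b}" "a < b"
        by (metis card_2_iff linorder_neq_iff insert_commute)
      show ?thesis
      proof (cases "adj a b")
        case True
        have e1: "{v\<in>W. \<not> (\<exists>u\<in>W. adj v u)} = {}" using ab True sym by auto
        have e2: "NE adj W = {}" using ab True by (auto simp: NE_def)
        have "ISO = 0" unfolding ISO_def e1 by simp
        moreover have "NC = 0" unfolding NC_def e2 by simp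
        moreover have "Cf adj 1 W = 0" unfolding C1 e2 by simp
        ultimately show ?thesis by simp
      next
        case False
        have iso: "{v\<in>W. \<not> (\<exists>u\<in>W. adj v u)} = {a, b}" using ab False sym irr by auto
        have dga: "dg adj W a = 0" "dg adj W b = 0" using ab False sym irr by (auto intro!: iso_dg)
        have Wa: "W - {a} = {b}" "W - {b} = {a}" "W - {a, b} = {}" using ab by auto
        have q1: "Q adj {b} (Some a) = 0"
        proof -
          have e: "{w\<in>{b}. okx adj (Some a) w \<and> cnd adj {b} w} = {}" using ab False by auto
          have "Q adj {b} (Some a) = (\<Sum>v\<in>{w\<in>{b}. okx adj (Some a) w \<and> cnd adj {b} w}. monom 1 (dg adj {b} v) * Q adj ({b} - {v}) (Some v))"
            by (rule Q_unfold) simp_all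
          then show ?thesis unfolding e by simp
        qed
        have q2: "Q adj {a} (Some b) = 1"
        proof -
          have "{w\<in>{a}. okx adj (Some b) w \<and> cnd adj {a} w} = {a}" using ab by (auto simp: cnd_def)
          moreover have "dg adj {a} a = 0" by (simp add: dg_def)
          ultimately show ?thesis using Q_unfold[of "{a}" adj "Some b"] by (simp add: Q_empty)
        qed
        have ISO1: "ISO = 1"
          unfolding ISO_def iso using ab dga Wa q1 q2 by simp
        have NEW: "NE adj W = {(a, b)}" using ab False by (auto simp: NE_def)
        have "cnd adj (W - {a}) b" using Wa by (simp add: cnd_def)
        then have e: "{p\<in>NE adj W. \<not> cnd adj (W - {fst p}) (snd p)} = {}" unfolding NEW by auto
        have NC0: "NC = 0" unfolding NC_def e by simp
        have "Cf adj 1 W = 1" unfolding C1 NEW F_def by (simp add: dga Wa(3) Q_empty)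
        then show ?thesis using ISO1 NC0 True by simp
      qed
    next
      case False
      then have c3: "card W \<ge> 3" using c2 by linarith
      define Iso where "Iso = {v\<in>W. \<not> (\<exists>u\<in>W. adj v u)}"
      define Bz where "Bz z = {v\<in>W. v < z}" for z
      have ISO2: "ISO = (\<Sum>z\<in>Iso. \<Sum>v\<in>Bz z. F (v, z))"
        unfolding ISO_def Iso_def[symmetric]
      proof (rule sum.cong[OF refl])
        fix z assume z: "z \<in> Iso"
        then have zi: "z \<in> W" "\<forall>u\<in>W. \<not> adj z u" by (auto simp: Iso_def)
        have "monom 1 (dg adj W z) * Q adj (W - {z}) (Some z)
            = (\<Sum>v\<in>{v\<in>W. v < z}. monom 1 (dg adj W v) * Q adj (W - {v, z}) None)"
          using iso_Q[OF W(1) c3 zi] iso_dg[OF zi(2)] by simp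
        also have "\<dots> = (\<Sum>v\<in>Bz z. F (v, z))"
          unfolding Bz_def F_def using iso_dg[OF zi(2)] by simp
        finally show "monom 1 (dg adj W z) * Q adj (W - {z}) (Some z) = (\<Sum>v\<in>Bz z. F (v, z))" .
      qed
      have setq: "{p\<in>NE adj W. \<not> cnd adj (W - {fst p}) (snd p)} = (\<lambda>q. (snd q, fst q)) ` Sigma Iso Bz"
      proof (intro set_eqI iffI)
        fix p assume p: "p \<in> {p\<in>NE adj W. \<not> cnd adj (W - {fst p}) (snd p)}"
        then have "snd p \<in> Iso" "fst p \<in> Bz (snd p)" using sym by (auto simp: NE_def cnd_def Iso_def Bz_def)
        then show "p \<in> (\<lambda>q. (snd q, fst q)) ` Sigma Iso Bz"
          by (intro image_eqI[of _ _ "(snd p, fst p)"]) auto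
      next
        fix p assume "p \<in> (\<lambda>q. (snd q, fst q)) ` Sigma Iso Bz"
        then obtain z v where zv: "p = (v, z)" "z \<in> Iso" "v \<in> Bz z" by auto
        then have z: "z \<in> W" "\<forall>u\<in>W. \<not> adj z u" "v \<in> W" "v < z" by (auto simp: Iso_def Bz_def)
        have c2v: "card (W - {v}) \<ge> 2" using c3 z fW by simp
        have "W - {v} \<noteq> {z}"
        proof
          assume "W - {v} = {z}"
          then have "card (W - {v}) = 1" by simp
          then show False using c2v by simp
        qed
        then have "\<not> cnd adj (W - {v}) z" using z by (auto simp: cnd_def)
        moreover have "(v, z) \<in> NE adj W" using z sym by (auto simp: NE_def)
        ultimately show "p \<in> {p\<in>NE adj W. \<not> cnd adj (W - {fst p}) (snd p)}" using zv by simp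
      qed
      have "NC = (\<Sum>q\<in>Sigma Iso Bz. F (snd q, fst q))"
        unfolding NC_def setq by (subst sum.reindex) (auto simp: inj_on_def)
      also have "\<dots> = (\<Sum>z\<in>Iso. \<Sum>v\<in>Bz z. F (v, z))"
      proof -
        have fI: "finite Iso" using fW by (simp add: Iso_def)
        have "\<forall>z\<in>Iso. finite (Bz z)" using fW by (simp add: Bz_def)
        from sum.Sigma[OF fI this, of "\<lambda>z v. F (v, z)"] show ?thesis by (simp add: split_def)
      qed
      finally show ?thesis using ISO2 False by simp
    qed
    show ?thesis unfolding LHS C1split key by simp
  qed
qed

definition sig :: "nat \<times> nat \<times> nat \<Rightarrow> nat \<times> nat \<times> nat" where
  "sig t = (let v = fst t; a = fst (snd t); b = snd (snd t) in
     if adj v a \<and> adj v b then t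
     else if \<not> adj v a then (b, min v a, max v a)
     else (a, min v b, max v b))"

definition TT :: "nat set \<Rightarrow> (nat \<times> nat \<times> nat) set" where
  "TT W = {t. fst t \<in> W \<and> snd t \<in> NE adj W \<and> fst t \<noteq> fst (snd t) \<and> fst t \<noteq> snd (snd t)}"

lemma sig_props:
  assumes W: "W \<subseteq> V" and t: "(v, a, b) \<in> TT W"
  shows "sig (v, a, b) \<in> TT W \<and> sig (sig (v, a, b)) = (v, a, b)
    \<and> {fst (sig (v, a, b)), fst (snd (sig (v, a, b))), snd (snd (sig (v, a, b)))} = {v, a, b}
    \<and> (if fst (snd (sig (v, a, b))) < fst (sig (v, a, b)) \<and> adj (fst (snd (sig (v, a, b)))) (fst (sig (v, a, b))) then 1 else 0)
      + (if snd (snd (sig (v, a, b))) < fst (sig (v, a, b)) \<and> adj (snd (snd (sig (v, a, b)))) (fst (sig (v, a, b))) then 1 else 0)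
      = (if v < a \<and> adj v a then 1 else (0::nat)) + (if v < b \<and> adj v b then 1 else 0)"
proof -
  have h: "v \<in> W" "a \<in> W" "b \<in> W" "a < b" "\<not> adj a b" "v \<noteq> a" "v \<noteq> b"
    using t by (auto simp: TT_def NE_def)
  have hV: "v \<in> V" "a \<in> V" "b \<in> V" using h W by auto
  have ba: "\<not> adj b a" using h sym by auto
  consider (A) "adj v a \<and> adj v b" | (B) "\<not> adj v a" | (C) "adj v a \<and> \<not> adj v b" by blast
  then show ?thesis
  proof cases
    case A
    have "a < v"
    proof (rule ccontr)
      assume "\<not> a < v" then have "v < a" using h by auto
      then show False using P1[of v a b] hV h A by auto
    qed
    moreover have "v < b"
    proof (rule ccontr)
      assume "\<not> v < b" then have "b < v" using h by auto
      then show False using P1[of a b v] hV h A sym by auto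
    qed
    ultimately show ?thesis using A t h sym by (simp add: sig_def)
  next
    case B
    then have vb: "adj v b" using P2[of v a b] hV h by auto
    have s1: "sig (v, a, b) = (b, min v a, max v a)" using B by (simp add: sig_def)
    have m1: "(b, min v a, max v a) \<in> TT W"
      using h B sym by (auto simp: TT_def NE_def min_def max_def)
    have m2: "sig (b, min v a, max v a) = (v, a, b)"
    proof (cases "a < v")
      case True then show ?thesis using h ba vb sym by (simp add: sig_def min_def max_def)
    next
      case False then have "v < a" using h by auto
      then show ?thesis using h ba vb sym by (simp add: sig_def min_def max_def)
    qed
    have m3: "(if min v a < b \<and> adj (min v a) b then 1 else 0) + (if max v a < b \<and> adj (max v a) b then 1 else 0)
           = (if v < a \<and> adj v a then 1 else (0::nat)) + (if v < b \<and> adj v b then 1 else 0)"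
      using h B vb sym by (cases "a < v") (auto simp: min_def max_def)
    have m4: "{b, min v a, max v a} = {v, a, b}" by (auto simp: min_def max_def)
    show ?thesis unfolding s1 using m1 m2 m3 m4 by simp
  next
    case C
    have s1: "sig (v, a, b) = (a, min v b, max v b)" using C by (simp add: sig_def)
    have m1: "(a, min v b, max v b) \<in> TT W"
      using h C sym by (auto simp: TT_def NE_def min_def max_def)
    have m2: "sig (a, min v b, max v b) = (v, a, b)"
    proof (cases "b < v")
      case True then show ?thesis using h C sym by (simp add: sig_def min_def max_def)
    next
      case False then have "v < b" using h by auto
      then show ?thesis using h C sym by (simp add: sig_def min_def max_def)
    qed
    have m3: "(if min v b < a \<and> adj (min v b) a then 1 else 0) + (if max v b < a \<and> adj (max v b) a then 1 else 0)
           = (if v < a \<and> adj v a then 1 else (0::nat)) + (if v < b \<and> adj v b then 1 else 0)"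
      using h C sym by (cases "b < v") (auto simp: min_def max_def)
    have m4: "{a, min v b, max v b} = {v, a, b}" by (auto simp: min_def max_def)
    show ?thesis unfolding s1 using m1 m2 m3 m4 by simp
  qed
qed

lemma E1:
  assumes "finite W" "(v, a, b) \<in> TT W"
  shows "dg adj W v + dg adj (W - {v}) a + dg adj (W - {v}) b
     + ((if v < a \<and> adj v a then 1 else 0) + (if v < b \<and> adj v b then 1 else 0))
     = dg adj W v + dg adj W a + dg adj W b"
proof -
  have h: "v \<in> W" "v \<noteq> a" "v \<noteq> b" using assms(2) by (auto simp: TT_def)
  show ?thesis using dg_remove[OF assms(1) h(2), of adj] dg_remove[OF assms(1) h(3), of adj] h(1) by simp
qed

lemma E2:
  assumes "finite W" "(v, a, b) \<in> TT W"
  shows "dg adj W a + dg adj W b + dg adj (W - {a, b}) v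
     + ((if a < v \<and> adj a v then 1 else 0) + (if b < v \<and> adj b v then 1 else 0))
     = dg adj W v + dg adj W a + dg adj W b"
proof -
  have h: "a \<in> W" "b \<in> W" "v \<noteq> a" "v \<noteq> b" "a \<noteq> b" using assms(2) by (auto simp: TT_def NE_def)
  have "dg adj W v = dg adj (W - {a}) v + (if a < v \<and> adj a v then 1 else 0)"
    using dg_remove[OF assms(1), of a v adj] h by auto
  moreover have "dg adj (W - {a}) v = dg adj (W - {a} - {b}) v + (if b < v \<and> adj b v then 1 else 0)"
    using dg_remove[of "W - {a}" b v adj] h assms(1) by auto
  moreover have "W - {a} - {b} = W - {a, b}" by auto
  ultimately show ?thesis by simp
qed

lemma E3:
  assumes "v \<noteq> a" "v \<noteq> b" "a \<noteq> b"
  shows "dg adj W v + dg adj W a + dg adj W b = sum (dg adj W) {v, a, b}"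
  using assms by simp

lemma swap:
  fixes f :: "nat set \<Rightarrow> int poly"
  assumes W: "W \<subseteq> V"
  shows "(\<Sum>v\<in>W. monom 1 (dg adj W v) * (\<Sum>p\<in>NE adj (W - {v}). monom 1 (dg adj (W - {v}) (fst p) + dg adj (W - {v}) (snd p)) * f (W - {v} - {fst p, snd p})))
   = (\<Sum>p\<in>NE adj W. monom 1 (dg adj W (fst p) + dg adj W (snd p)) * (\<Sum>v\<in>W - {fst p, snd p}. monom 1 (dg adj (W - {fst p, snd p}) v) * f (W - {fst p, snd p} - {v})))"
proof -
  have fW: "finite W" using W finV finite_subset by blast
  define gL where "gL t = monom 1 (dg adj W (fst t) + dg adj (W - {fst t}) (fst (snd t)) + dg adj (W - {fst t}) (snd (snd t)))
     * f (W - {fst t, fst (snd t), snd (snd t)})" for t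
  define gR where "gR t = monom 1 (dg adj W (fst (snd t)) + dg adj W (snd (snd t)) + dg adj (W - {fst (snd t), snd (snd t)}) (fst t))
     * f (W - {fst t, fst (snd t), snd (snd t)})" for t
  have finT: "finite (TT W)"
    by (rule finite_subset[of _ "W \<times> W \<times> W"]) (auto simp: TT_def NE_def fW)
  have L: "(\<Sum>v\<in>W. monom 1 (dg adj W v) * (\<Sum>p\<in>NE adj (W - {v}). monom 1 (dg adj (W - {v}) (fst p) + dg adj (W - {v}) (snd p)) * f (W - {v} - {fst p, snd p})))
      = sum gL (TT W)"
  proof -
    have "(\<Sum>v\<in>W. monom 1 (dg adj W v) * (\<Sum>p\<in>NE adj (W - {v}). monom 1 (dg adj (W - {v}) (fst p) + dg adj (W - {v}) (snd p)) * f (W - {v} - {fst p, snd p})))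
       = (\<Sum>v\<in>W. \<Sum>p\<in>NE adj (W - {v}). gL (v, p))"
    proof (rule sum.cong[OF refl])
      fix v assume "v \<in> W"
      have "\<And>p. W - {v} - {fst p, snd p} = W - {v, fst p, snd p}" by auto
      then show "monom 1 (dg adj W v) * (\<Sum>p\<in>NE adj (W - {v}). monom 1 (dg adj (W - {v}) (fst p) + dg adj (W - {v}) (snd p)) * f (W - {v} - {fst p, snd p}))
          = (\<Sum>p\<in>NE adj (W - {v}). gL (v, p))"
        by (simp add: gL_def sum_distrib_left mono_mult2 add.assoc)
    qed
    also have "\<dots> = (\<Sum>(v, p)\<in>Sigma W (\<lambda>v. NE adj (W - {v})). gL (v, p))"
      by (rule sum.Sigma[OF fW]) (auto intro: finite_NE simp: fW)
    also have "Sigma W (\<lambda>v. NE adj (W - {v})) = TT W"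
      by (auto simp: TT_def NE_def)
    finally show ?thesis by simp
  qed
  have R: "(\<Sum>p\<in>NE adj W. monom 1 (dg adj W (fst p) + dg adj W (snd p)) * (\<Sum>v\<in>W - {fst p, snd p}. monom 1 (dg adj (W - {fst p, snd p}) v) * f (W - {fst p, snd p} - {v})))
      = sum gR (TT W)"
  proof -
    have "(\<Sum>p\<in>NE adj W. monom 1 (dg adj W (fst p) + dg adj W (snd p)) * (\<Sum>v\<in>W - {fst p, snd p}. monom 1 (dg adj (W - {fst p, snd p}) v) * f (W - {fst p, snd p} - {v})))
       = (\<Sum>p\<in>NE adj W. \<Sum>v\<in>W - {fst p, snd p}. gR (v, p))"
    proof (rule sum.cong[OF refl])
      fix p assume "p \<in> NE adj W"
      have "\<And>v. W - {fst p, snd p} - {v} = W - {v, fst p, snd p}" by auto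
      then show "monom 1 (dg adj W (fst p) + dg adj W (snd p)) * (\<Sum>v\<in>W - {fst p, snd p}. monom 1 (dg adj (W - {fst p, snd p}) v) * f (W - {fst p, snd p} - {v}))
          = (\<Sum>v\<in>W - {fst p, snd p}. gR (v, p))"
        by (simp add: gR_def sum_distrib_left mono_mult2 add.assoc)
    qed
    also have "\<dots> = (\<Sum>(p, v)\<in>Sigma (NE adj W) (\<lambda>p. W - {fst p, snd p}). gR (v, p))"
      by (rule sum.Sigma) (auto intro: finite_NE simp: fW)
    also have "\<dots> = (\<Sum>t\<in>(\<lambda>q. (snd q, fst q)) ` Sigma (NE adj W) (\<lambda>p. W - {fst p, snd p}). gR t)"
      by (subst sum.reindex) (auto simp: inj_on_def split_def)
    also have "(\<lambda>q. (snd q, fst q)) ` Sigma (NE adj W) (\<lambda>p. W - {fst p, snd p}) = TT W"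
      by (force simp: TT_def NE_def)
    finally show ?thesis .
  qed
  have M: "sum gL (TT W) = sum gR (TT W)"
  proof (rule sum.reindex_bij_witness[where i = sig and j = sig])
    fix t assume t: "t \<in> TT W"
    obtain v a b where vab: "t = (v, a, b)" by (cases t) auto
    note sp = sig_props[OF W t[unfolded vab]]
    show "sig (sig t) = t" using sp vab by simp
    show "sig t \<in> TT W" using sp vab by simp
  next
    fix t assume t: "t \<in> TT W"
    obtain v a b where vab: "t = (v, a, b)" by (cases t) auto
    note sp = sig_props[OF W t[unfolded vab]]
    show "sig (sig t) = t" using sp vab by simp
    show "sig t \<in> TT W" using sp vab by simp
  next
    fix t assume t: "t \<in> TT W"
    obtain v a b where vab: "t = (v, a, b)" by (cases t) auto
    note sp = sig_props[OF W t[unfolded vab]]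
    obtain v' a' b' where vab': "sig t = (v', a', b')" by (cases "sig t") auto
    have t': "(v', a', b') \<in> TT W" using sp vab vab' by simp
    have set: "{v', a', b'} = {v, a, b}" using sp vab vab' by simp
    have IJ: "(if a' < v' \<and> adj a' v' then 1 else 0) + (if b' < v' \<and> adj b' v' then 1 else 0)
       = (if v < a \<and> adj v a then 1 else (0::nat)) + (if v < b \<and> adj v b then 1 else 0)"
      using sp vab vab' by simp
    have d1: "v \<noteq> a" "v \<noteq> b" "a \<noteq> b" using t vab by (auto simp: TT_def NE_def)
    have d2: "v' \<noteq> a'" "v' \<noteq> b'" "a' \<noteq> b'" using t' by (auto simp: TT_def NE_def)
    have S: "dg adj W v' + dg adj W a' + dg adj W b' = dg adj W v + dg adj W a + dg adj W b"
      using E3[OF d1, of W] E3[OF d2, of W] set by simp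
    have "dg adj W a' + dg adj W b' + dg adj (W - {a', b'}) v'
        = dg adj W v + dg adj (W - {v}) a + dg adj (W - {v}) b"
      using E1[OF fW t[unfolded vab]] E2[OF fW t'] S IJ by linarith
    then have "gR (v', a', b') = gL (v, a, b)" unfolding gL_def gR_def using set by simp
    then show "gR (sig t) = gL t" using vab vab' by simp
  qed
  show ?thesis using L R M by simp
qed

lemma R1:
  assumes "W \<subseteq> V" "W \<noteq> {}" "2 * k + 1 \<le> card W"
  shows "D adj k W = Cf adj k W + Cf adj (Suc k) W + (if card W = 2 * k + 2 then Cf adj (Suc k) W else 0)"
  using assms
proof (induction k arbitrary: W)
  case 0
  then show ?case using R1_0[OF "0.prems"(1,2)] by simp
next
  case (Suc k)
  have fW: "finite W" using Suc.prems(1) finV finite_subset by blast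
  define M where "M p = monom (1::int) (dg adj W (fst p) + dg adj W (snd p))" for p
  have cardp: "card (W - {fst p, snd p}) = card W - 2" if "p \<in> NE adj W" for p
    using that fW by (auto simp: NE_def card_Diff_subset)
  have "D adj (Suc k) W = (\<Sum>v\<in>W. monom 1 (dg adj W v) * (\<Sum>p\<in>NE adj (W - {v}). monom 1 (dg adj (W - {v}) (fst p) + dg adj (W - {v}) (snd p)) * Cf adj k (W - {v} - {fst p, snd p})))"
    by (simp add: D_def)
  also have "\<dots> = (\<Sum>p\<in>NE adj W. M p * D adj k (W - {fst p, snd p}))"
    unfolding swap[OF Suc.prems(1), of "Cf adj k"] M_def D_def by simp
  also have "\<dots> = (\<Sum>p\<in>NE adj W. M p * (Cf adj k (W - {fst p, snd p}) + Cf adj (Suc k) (W - {fst p, snd p})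
        + (if card W = 2 * Suc k + 2 then Cf adj (Suc k) (W - {fst p, snd p}) else 0)))"
  proof (rule sum.cong[OF refl])
    fix p assume p: "p \<in> NE adj W"
    have W': "W - {fst p, snd p} \<subseteq> V" using Suc.prems(1) by auto
    have c: "card (W - {fst p, snd p}) = card W - 2" using cardp[OF p] .
    have c2: "2 * k + 1 \<le> card (W - {fst p, snd p})" using c Suc.prems(3) by simp
    have ne: "W - {fst p, snd p} \<noteq> {}"
    proof
      assume "W - {fst p, snd p} = {}"
      then have "card (W - {fst p, snd p}) = 0" by (simp only: card.empty)
      then show False using c2 by simp
    qed
    have "(card (W - {fst p, snd p}) = 2 * k + 2) = (card W = 2 * Suc k + 2)" using c Suc.prems(3) by auto
    then show "M p * D adj k (W - {fst p, snd p}) = M p * (Cf adj k (W - {fst p, snd p}) + Cf adj (Suc k) (W - {fst p, snd p})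
        + (if card W = 2 * Suc k + 2 then Cf adj (Suc k) (W - {fst p, snd p}) else 0))"
      using Suc.IH[OF W' ne c2] by simp
  qed
  also have "\<dots> = Cf adj (Suc k) W + Cf adj (Suc (Suc k)) W + (if card W = 2 * Suc k + 2 then Cf adj (Suc (Suc k)) W else 0)"
    by (simp add: M_def distrib_left sum.distrib)
  finally show ?case .
qed

end

lemma count_img:
  assumes "finite W"
  shows "count (image_mset \<kappa> (mset_set W)) c = card {u \<in> W. \<kappa> u = c}"
proof -
  have "count (image_mset \<kappa> (mset_set W)) c = sum (count (mset_set W)) (\<kappa> -` {c} \<inter> W)"
    using assms by (simp add: count_image_mset)
  also have "\<dots> = sum (\<lambda>_. 1) (\<kappa> -` {c} \<inter> W)"
    using assms by (intro sum.cong) auto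
  also have "\<dots> = card (\<kappa> -` {c} \<inter> W)" by simp
  also have "\<kappa> -` {c} \<inter> W = {u \<in> W. \<kappa> u = c}" by auto
  finally show ?thesis .
qed

lemma img_cong: "(\<forall>u\<in>W. \<kappa> u = \<kappa>' u) \<Longrightarrow> image_mset \<kappa> (mset_set W) = image_mset \<kappa>' (mset_set W)"
proof -
  assume h: "\<forall>u\<in>W. \<kappa> u = \<kappa>' u"
  show ?thesis
  proof (rule image_mset_cong)
    fix x assume x: "x \<in># mset_set W"
    then have "finite W" by (metis mset_set.infinite set_mset_empty empty_iff)
    then have "x \<in> W" using x by simp
    then show "\<kappa> x = \<kappa>' x" using h by simp
  qed
qed

lemma asc_cong: "(\<forall>u\<in>W. \<kappa> u = \<kappa>' u) \<Longrightarrow> asc W E \<kappa> = asc W E \<kappa>'"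
proof -
  assume h: "\<forall>u\<in>W. \<kappa> u = \<kappa>' u"
  have "{(i, j). i \<in> W \<and> j \<in> W \<and> i < j \<and> E i j \<and> \<kappa> i < \<kappa> j} = {(i, j). i \<in> W \<and> j \<in> W \<and> i < j \<and> E i j \<and> \<kappa>' i < \<kappa>' j}"
    using h by auto
  then show ?thesis by (simp add: asc_def)
qed

lemma proper_cong: "(\<forall>u\<in>W. \<kappa> u = \<kappa>' u) \<Longrightarrow> proper_coloring W E \<kappa> = proper_coloring W E \<kappa>'"
  by (simp add: proper_coloring_def)

lemma asc_add1:
  assumes "finite W" "v \<in> W" "\<forall>u\<in>W - {v}. \<kappa> u < \<kappa> v"
  shows "asc W E \<kappa> = asc (W - {v}) E \<kappa> + dg E W v"
proof -
  let ?P = "{(i, j). i \<in> W \<and> j \<in> W \<and> i < j \<and> E i j \<and> \<kappa> i < \<kappa> j}"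
  let ?P' = "{(i, j). i \<in> W - {v} \<and> j \<in> W - {v} \<and> i < j \<and> E i j \<and> \<kappa> i < \<kappa> j}"
  let ?Pv = "(\<lambda>u. (u, v)) ` {u \<in> W. u < v \<and> E u v}"
  have eq: "?P = ?P' \<union> ?Pv"
  proof (intro set_eqI iffI)
    fix x assume "x \<in> ?P"
    then obtain i j where x: "x = (i, j)" "i \<in> W" "j \<in> W" "i < j" "E i j" "\<kappa> i < \<kappa> j" by auto
    show "x \<in> ?P' \<union> ?Pv"
    proof (cases "j = v")
      case True then show ?thesis using x by auto
    next
      case False
      have "i \<noteq> v"
      proof
        assume "i = v" then have "\<kappa> j < \<kappa> v" using assms(3) x False by auto
        then show False using x \<open>i = v\<close> by simp
      qed
      then show ?thesis using x False by auto
    qed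
  next
    fix x assume "x \<in> ?P' \<union> ?Pv"
    then show "x \<in> ?P"
    proof
      assume "x \<in> ?P'" then show ?thesis by auto
    next
      assume "x \<in> ?Pv"
      then obtain u where u: "x = (u, v)" "u \<in> W" "u < v" "E u v" by auto
      then have "\<kappa> u < \<kappa> v" using assms(3) by auto
      then show ?thesis using u assms(2) by auto
    qed
  qed
  have fin1: "finite ?P'" by (rule finite_subset[of _ "W \<times> W"]) (auto simp: assms(1))
  have fin2: "finite ?Pv" using assms(1) by simp
  have disj: "?P' \<inter> ?Pv = {}" by auto
  have "card ?Pv = card {u \<in> W. u < v \<and> E u v}" by (rule card_image) (auto simp: inj_on_def)
  then have "card ?P = card ?P' + dg E W v"
    unfolding eq dg_def using card_Un_disjoint[OF fin1 fin2 disj] by simp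
  then show ?thesis by (simp add: asc_def)
qed

lemma asc_add2:
  assumes "finite W" "a \<in> W" "b \<in> W" "a < b" "\<not> E a b" "\<kappa> a = \<kappa> b" "\<forall>u\<in>W - {a, b}. \<kappa> u < \<kappa> a"
  shows "asc W E \<kappa> = asc (W - {a, b}) E \<kappa> + dg E W a + dg E W b"
proof -
  let ?P = "{(i, j). i \<in> W \<and> j \<in> W \<and> i < j \<and> E i j \<and> \<kappa> i < \<kappa> j}"
  let ?P' = "{(i, j). i \<in> W - {a, b} \<and> j \<in> W - {a, b} \<and> i < j \<and> E i j \<and> \<kappa> i < \<kappa> j}"
  let ?Pa = "(\<lambda>u. (u, a)) ` {u \<in> W. u < a \<and> E u a}"
  let ?Pb = "(\<lambda>u. (u, b)) ` {u \<in> W. u < b \<and> E u b}"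
  have eq: "?P = ?P' \<union> ?Pa \<union> ?Pb"
  proof (intro set_eqI iffI)
    fix x assume "x \<in> ?P"
    then obtain i j where x: "x = (i, j)" "i \<in> W" "j \<in> W" "i < j" "E i j" "\<kappa> i < \<kappa> j" by auto
    have "i \<noteq> a"
    proof
      assume ia: "i = a"
      show False
      proof (cases "j = b")
        case True then show False using x ia assms by simp
      next
        case False then have "\<kappa> j < \<kappa> a" using assms(7) x ia by auto
        then show False using x ia by simp
      qed
    qed
    moreover have "i \<noteq> b"
    proof
      assume ib: "i = b"
      then have "j \<noteq> a" using x assms(4) by auto
      then have "\<kappa> j < \<kappa> a" using assms(7) x ib by auto
      then show False using x ib assms(6) by simp
    qed
    ultimately show "x \<in> ?P' \<union> ?Pa \<union> ?Pb" using x by auto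
  next
    fix x assume "x \<in> ?P' \<union> ?Pa \<union> ?Pb"
    then consider "x \<in> ?P'" | "x \<in> ?Pa" | "x \<in> ?Pb" by blast
    then show "x \<in> ?P"
    proof cases
      case 1 then show ?thesis by auto
    next
      case 2
      then obtain u where u: "x = (u, a)" "u \<in> W" "u < a" "E u a" by auto
      then have "u \<noteq> b" using assms(4) by auto
      then have "\<kappa> u < \<kappa> a" using assms(7) u by auto
      then show ?thesis using u assms(2) by auto
    next
      case 3
      then obtain u where u: "x = (u, b)" "u \<in> W" "u < b" "E u b" by auto
      then have "u \<noteq> a" using assms(5) by auto
      then have "\<kappa> u < \<kappa> b" using assms(6,7) u by auto
      then show ?thesis using u assms(3) by auto
    qed
  qed
  have fin1: "finite ?P'" by (rule finite_subset[of _ "W \<times> W"]) (auto simp: assms(1))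
  have fin2: "finite ?Pa" "finite ?Pb" using assms(1) by simp_all
  have disj1: "?P' \<inter> ?Pa = {}" by auto
  have disj2: "(?P' \<union> ?Pa) \<inter> ?Pb = {}" using assms(4) by auto
  have ca: "card ?Pa = dg E W a" unfolding dg_def by (rule card_image) (auto simp: inj_on_def)
  have cb: "card ?Pb = dg E W b" unfolding dg_def by (rule card_image) (auto simp: inj_on_def)
  have "card ?P = card ?P' + dg E W a + dg E W b"
    unfolding eq using card_Un_disjoint[OF _ fin2(2) disj2] card_Un_disjoint[OF fin1 fin2(1) disj1] fin1 fin2 ca cb
    by simp
  then show ?thesis by (simp add: asc_def)
qed

definition CS :: "nat set \<Rightarrow> (nat \<Rightarrow> nat \<Rightarrow> bool) \<Rightarrow> nat multiset \<Rightarrow> (nat \<Rightarrow> nat) set" where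
  "CS W E \<alpha> = {\<kappa> \<in> W \<rightarrow>\<^sub>E set_mset \<alpha>. proper_coloring W E \<kappa> \<and> image_mset \<kappa> (mset_set W) = \<alpha>}"

lemma chrom_CS: "chrom_qsf W E \<alpha> = (\<Sum>\<kappa>\<in>CS W E \<alpha>. monom 1 (asc W E \<kappa>))"
  by (simp add: chrom_qsf_def CS_def)

lemma finite_CS: "finite W \<Longrightarrow> finite (CS W E \<alpha>)"
  by (rule finite_subset[of _ "W \<rightarrow>\<^sub>E set_mset \<alpha>"]) (auto simp: CS_def intro!: finite_PiE)

lemma X_size: "finite W \<Longrightarrow> size \<alpha> \<noteq> card W \<Longrightarrow> chrom_qsf W E \<alpha> = 0"
proof -
  assume a: "finite W" "size \<alpha> \<noteq> card W"
  have "CS W E \<alpha> = {}"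
  proof (rule ccontr)
    assume "CS W E \<alpha> \<noteq> {}"
    then obtain \<kappa> where "image_mset \<kappa> (mset_set W) = \<alpha>" by (auto simp: CS_def)
    then have "size \<alpha> = card W" using a by (metis size_image_mset size_mset_set)
    then show False using a by simp
  qed
  then show ?thesis by (simp add: chrom_CS)
qed

lemma X_zero: "0 \<in># \<alpha> \<Longrightarrow> chrom_qsf W E \<alpha> = 0"
proof -
  assume a: "0 \<in># \<alpha>"
  have "CS W E \<alpha> = {}"
  proof (rule ccontr)
    assume "CS W E \<alpha> \<noteq> {}"
    then obtain \<kappa> where k: "image_mset \<kappa> (mset_set W) = \<alpha>" "proper_coloring W E \<kappa>" by (auto simp: CS_def)
    then obtain u where "u \<in># mset_set W" "\<kappa> u = 0" using a by (metis imageE set_image_mset)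
    moreover then have "finite W" by (metis mset_set.infinite set_mset_empty empty_iff)
    ultimately show False using k(2) by (auto simp: proper_coloring_def)
  qed
  then show ?thesis by (simp add: chrom_CS)
qed

lemma X_empty: "chrom_qsf {} E {#} = 1"
proof -
  have "CS {} E {#} = {\<lambda>x. undefined}" by (auto simp: CS_def proper_coloring_def)
  moreover have "asc {} E (\<lambda>x. undefined) = 0" by (simp add: asc_def)
  ultimately show ?thesis by (simp add: chrom_CS)
qed

lemma X1:
  assumes fW: "finite W" and cA: "c \<notin># A" and lt: "\<forall>x\<in>#A. x < c" and c0: "0 < c"
    and irr: "\<forall>x. \<not> E x x"
  shows "chrom_qsf W E (add_mset c A) = (\<Sum>v\<in>W. monom 1 (dg E W v) * chrom_qsf (W - {v}) E A)"
proof -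
  define h where "h p = (snd p) (fst p := c)" for p :: "nat \<times> (nat \<Rightarrow> nat)"
  define S where "S = Sigma W (\<lambda>v. CS (W - {v}) E A)"
  have mem: "h (v, \<kappa>') \<in> CS W E (add_mset c A)" if v: "v \<in> W" and k: "\<kappa>' \<in> CS (W - {v}) E A" for v \<kappa>'
  proof -
    have kp: "\<kappa>' \<in> (W - {v}) \<rightarrow>\<^sub>E set_mset A" "proper_coloring (W - {v}) E \<kappa>'"
      "image_mset \<kappa>' (mset_set (W - {v})) = A" using k by (auto simp: CS_def)
    have "\<kappa>'(v := c) \<in> W \<rightarrow>\<^sub>E set_mset (add_mset c A)"
    proof (rule PiE_I)
      fix x assume x: "x \<in> W"
      show "(\<kappa>'(v := c)) x \<in> set_mset (add_mset c A)"
      proof (cases "x = v")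
        case True then show ?thesis by simp
      next
        case False then have "\<kappa>' x \<in> set_mset A" using PiE_mem[OF kp(1)] x by simp
        then show ?thesis using False by simp
      qed
    next
      fix x assume x: "x \<notin> W"
      then have "x \<noteq> v" "x \<notin> W - {v}" using v by auto
      then show "(\<kappa>'(v := c)) x = undefined" using PiE_arb[OF kp(1)] by simp
    qed
    moreover have "proper_coloring W E (\<kappa>'(v := c))"
    proof -
      have pos: "\<forall>u\<in>W - {v}. 0 < \<kappa>' u" using kp(2) by (simp add: proper_coloring_def)
      have inA: "\<forall>u\<in>W - {v}. \<kappa>' u \<in># A" using PiE_mem[OF kp(1)] by blast
      have "\<forall>i\<in>W. \<forall>j\<in>W. E i j \<longrightarrow> (\<kappa>'(v := c)) i \<noteq> (\<kappa>'(v := c)) j"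
      proof (intro ballI impI)
        fix i j assume ij: "i \<in> W" "j \<in> W" "E i j"
        then have "i \<noteq> j" using irr by auto
        then show "(\<kappa>'(v := c)) i \<noteq> (\<kappa>'(v := c)) j"
          using ij kp(2) inA cA unfolding proper_coloring_def by (cases "i = v"; cases "j = v") auto
      qed
      then show ?thesis using pos c0 by (auto simp: proper_coloring_def)
    qed
    moreover have "image_mset (\<kappa>'(v := c)) (mset_set W) = add_mset c A"
    proof -
      have "mset_set W = add_mset v (mset_set (W - {v}))" using fW v by (simp add: mset_set.remove)
      moreover have "image_mset (\<kappa>'(v := c)) (mset_set (W - {v})) = image_mset \<kappa>' (mset_set (W - {v}))"
        by (rule img_cong) simp
      ultimately show ?thesis using kp(3) by simp
    qed
    ultimately show ?thesis by (simp add: h_def CS_def)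
  qed
  have bij: "bij_betw h S (CS W E (add_mset c A))"
    unfolding bij_betw_def
  proof
    show "inj_on h S"
    proof (rule inj_onI)
      fix p q assume p: "p \<in> S" and q: "q \<in> S" and e: "h p = h q"
      obtain v1 k1 where p1: "p = (v1, k1)" by (cases p)
      obtain v2 k2 where q1: "q = (v2, k2)" by (cases q)
      have k1: "k1 \<in> (W - {v1}) \<rightarrow>\<^sub>E set_mset A" "v1 \<in> W" using p p1 by (auto simp: S_def CS_def)
      have k2: "k2 \<in> (W - {v2}) \<rightarrow>\<^sub>E set_mset A" "v2 \<in> W" using q q1 by (auto simp: S_def CS_def)
      have e': "k1(v1 := c) = k2(v2 := c)" using e p1 q1 by (simp add: h_def)
      have "v1 = v2"
      proof (rule ccontr)
        assume ne: "v1 \<noteq> v2"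
        have "c = (k1(v1 := c)) v1" by simp
        also have "\<dots> = k2 v1" using fun_cong[OF e', of v1] ne by simp
        finally have "c \<in># A" using k2 ne k1(2) by auto
        then show False using cA by simp
      qed
      moreover have "k1 = k2"
      proof
        fix x show "k1 x = k2 x"
        proof (cases "x = v1")
          case True
          then have "x \<notin> W - {v1}" "x \<notin> W - {v2}" using \<open>v1 = v2\<close> by auto
          then have "k1 x = undefined" "k2 x = undefined"
            using PiE_arb[OF k1(1)] PiE_arb[OF k2(1)] by blast+
          then show ?thesis by simp
        next
          case False
          then show ?thesis using fun_cong[OF e', of x] \<open>v1 = v2\<close> by simp
        qed
      qed
      ultimately show "p = q" using p1 q1 by simp
    qed
  next
    show "h ` S = CS W E (add_mset c A)"
    proof (intro set_eqI iffI)
      fix k assume "k \<in> h ` S"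
      then show "k \<in> CS W E (add_mset c A)" using mem by (auto simp: S_def)
    next
      fix k assume k: "k \<in> CS W E (add_mset c A)"
      then have kp: "k \<in> W \<rightarrow>\<^sub>E set_mset (add_mset c A)" "proper_coloring W E k"
        "image_mset k (mset_set W) = add_mset c A" by (auto simp: CS_def)
      have "c \<in># image_mset k (mset_set W)" using kp(3) by simp
      then obtain v where v: "v \<in> W" "k v = c" using fW by auto
      define k' where "k' = k(v := undefined)"
      have img: "image_mset k' (mset_set (W - {v})) = A"
      proof -
        have "mset_set W = add_mset v (mset_set (W - {v}))" using fW v by (simp add: mset_set.remove)
        then have "add_mset c A = add_mset c (image_mset k (mset_set (W - {v})))" using kp(3) v by simp
        moreover have "image_mset k' (mset_set (W - {v})) = image_mset k (mset_set (W - {v}))"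
          by (rule img_cong) (simp add: k'_def)
        ultimately show ?thesis by simp
      qed
      have "k' \<in> (W - {v}) \<rightarrow>\<^sub>E set_mset A"
      proof -
        have "\<forall>u\<in>W - {v}. k' u \<in># A"
        proof
          fix u assume u: "u \<in> W - {v}"
          then have "k' u \<in># image_mset k' (mset_set (W - {v}))" using fW by simp
          then show "k' u \<in># A" using img by simp
        qed
        moreover have "\<forall>u. u \<notin> W - {v} \<longrightarrow> k' u = undefined"
        proof (intro allI impI)
          fix u assume u: "u \<notin> W - {v}"
          show "k' u = undefined"
          proof (cases "u = v")
            case True then show ?thesis by (simp add: k'_def)
          next
            case False then have "u \<notin> W" using u by simp
            then show ?thesis using PiE_arb[OF kp(1)] False by (simp add: k'_def)
          qed
        qed
        ultimately show ?thesis by (intro PiE_I) auto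
      qed
      moreover have "proper_coloring (W - {v}) E k'"
        using kp(2) by (auto simp: proper_coloring_def k'_def)
      ultimately have "k' \<in> CS (W - {v}) E A" using img by (simp add: CS_def)
      moreover have "h (v, k') = k" using v by (auto simp: h_def k'_def)
      ultimately show "k \<in> h ` S" using v unfolding S_def by (metis SigmaI image_eqI)
    qed
  qed
  have "(\<Sum>v\<in>W. monom 1 (dg E W v) * chrom_qsf (W - {v}) E A)
      = (\<Sum>v\<in>W. \<Sum>k\<in>CS (W - {v}) E A. monom 1 (asc (W - {v}) E k + dg E W v))"
    by (simp add: chrom_CS sum_distrib_left mult_monom add.commute)
  also have "\<dots> = (\<Sum>(v, k)\<in>S. monom 1 (asc (W - {v}) E k + dg E W v))"
    unfolding S_def using fW by (intro sum.Sigma) (auto intro: finite_CS)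
  also have "\<dots> = (\<Sum>p\<in>S. monom 1 (asc W E (h p)))"
  proof (rule sum.cong[OF refl])
    fix p assume p: "p \<in> S"
    obtain v k where pk: "p = (v, k)" by (cases p)
    have v: "v \<in> W" and k: "k \<in> CS (W - {v}) E A" using p pk by (auto simp: S_def)
    have kP: "k \<in> (W - {v}) \<rightarrow>\<^sub>E set_mset A" using k by (simp add: CS_def)
    have "\<forall>u\<in>W - {v}. (k(v := c)) u < (k(v := c)) v"
      using PiE_mem[OF kP] lt by simp
    then have "asc W E (k(v := c)) = asc (W - {v}) E (k(v := c)) + dg E W v"
      by (rule asc_add1[OF fW v])
    also have "asc (W - {v}) E (k(v := c)) = asc (W - {v}) E k" by (rule asc_cong) simp
    finally have eq: "asc W E (k(v := c)) = asc (W - {v}) E k + dg E W v" .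
    show "(case p of (v, k) \<Rightarrow> monom 1 (asc (W - {v}) E k + dg E W v)) = monom 1 (asc W E (h p))"
      unfolding pk h_def by (simp only: prod.case fst_conv snd_conv eq)
  qed
  also have "\<dots> = (\<Sum>k\<in>CS W E (add_mset c A). monom 1 (asc W E k))"
    by (rule sum.reindex_bij_betw[OF bij])
  finally show ?thesis by (simp add: chrom_CS)
qed

lemma X2:
  assumes fW: "finite W" and cA: "c \<notin># A" and lt: "\<forall>x\<in>#A. x < c" and c0: "0 < c"
    and irr: "\<forall>x. \<not> E x x" and sym: "\<forall>x y. E x y = E y x"
  shows "chrom_qsf W E (add_mset c (add_mset c A))
     = (\<Sum>p\<in>NE E W. monom 1 (dg E W (fst p) + dg E W (snd p)) * chrom_qsf (W - {fst p, snd p}) E A)"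
proof -
  define h where "h q = (snd q) (fst (fst q) := c, snd (fst q) := c)" for q :: "(nat \<times> nat) \<times> (nat \<Rightarrow> nat)"
  define S where "S = Sigma (NE E W) (\<lambda>p. CS (W - {fst p, snd p}) E A)"
  have msW: "mset_set W = add_mset a (add_mset b (mset_set (W - {a, b})))" if "a \<in> W" "b \<in> W" "a \<noteq> b" for a b
  proof -
    have "mset_set W = add_mset a (mset_set (W - {a}))" using fW that by (simp add: mset_set.remove)
    moreover have "mset_set (W - {a}) = add_mset b (mset_set (W - {a} - {b}))" using fW that by (simp add: mset_set.remove)
    moreover have "W - {a} - {b} = W - {a, b}" by auto
    ultimately show ?thesis by simp
  qed
  have mem: "h ((a, b), \<kappa>') \<in> CS W E (add_mset c (add_mset c A)) \<and> {u \<in> W. h ((a, b), \<kappa>') u = c} = {a, b}"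
    if p: "(a, b) \<in> NE E W" and k: "\<kappa>' \<in> CS (W - {a, b}) E A" for a b \<kappa>'
  proof -
    have ab: "a \<in> W" "b \<in> W" "a < b" "\<not> E a b" using p by (auto simp: NE_def)
    have kp: "\<kappa>' \<in> (W - {a, b}) \<rightarrow>\<^sub>E set_mset A" "proper_coloring (W - {a, b}) E \<kappa>'"
      "image_mset \<kappa>' (mset_set (W - {a, b})) = A" using k by (auto simp: CS_def)
    have hk: "h ((a, b), \<kappa>') = \<kappa>'(a := c, b := c)" by (simp add: h_def)
    have inA: "\<forall>u\<in>W - {a, b}. \<kappa>' u \<in># A" using PiE_mem[OF kp(1)] by blast
    have P: "\<kappa>'(a := c, b := c) \<in> W \<rightarrow>\<^sub>E set_mset (add_mset c (add_mset c A))"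
    proof (rule PiE_I)
      fix x assume x: "x \<in> W"
      show "(\<kappa>'(a := c, b := c)) x \<in> set_mset (add_mset c (add_mset c A))"
      proof (cases "x = a \<or> x = b")
        case True then show ?thesis by auto
      next
        case False then have "\<kappa>' x \<in> set_mset A" using inA x by simp
        then show ?thesis using False by simp
      qed
    next
      fix x assume x: "x \<notin> W"
      then have "x \<noteq> a" "x \<noteq> b" "x \<notin> W - {a, b}" using ab by auto
      then show "(\<kappa>'(a := c, b := c)) x = undefined" using PiE_arb[OF kp(1)] by simp
    qed
    have Pr: "proper_coloring W E (\<kappa>'(a := c, b := c))"
    proof -
      have pos: "\<forall>u\<in>W - {a, b}. 0 < \<kappa>' u" using kp(2) by (simp add: proper_coloring_def)
      have "\<forall>i\<in>W. \<forall>j\<in>W. E i j \<longrightarrow> (\<kappa>'(a := c, b := c)) i \<noteq> (\<kappa>'(a := c, b := c)) j"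
      proof (intro ballI impI)
        fix i j assume ij: "i \<in> W" "j \<in> W" "E i j"
        then have ne: "i \<noteq> j" using irr by auto
        have nab: "\<not> E a b" "\<not> E b a" using ab sym by auto
        show "(\<kappa>'(a := c, b := c)) i \<noteq> (\<kappa>'(a := c, b := c)) j"
        proof (cases "i \<in> {a, b}")
          case True
          then show ?thesis
          proof (cases "j \<in> {a, b}")
            case True
            then show ?thesis using \<open>i \<in> {a, b}\<close> ne ij(3) nab by auto
          next
            case False
            then have "\<kappa>' j \<in># A" using inA ij by simp
            then show ?thesis using True False cA by auto
          qed
        next
          case False
          then have iA: "\<kappa>' i \<in># A" using inA ij by simp
          show ?thesis
          proof (cases "j \<in> {a, b}")
            case True
            then show ?thesis using False iA cA by auto
          next
            case F2: False
            then show ?thesis using False ij kp(2) unfolding proper_coloring_def by auto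
          qed
        qed
      qed
      moreover have "\<forall>v\<in>W. 0 < (\<kappa>'(a := c, b := c)) v" using pos c0 by auto
      ultimately show ?thesis by (simp add: proper_coloring_def)
    qed
    have Im: "image_mset (\<kappa>'(a := c, b := c)) (mset_set W) = add_mset c (add_mset c A)"
    proof -
      have "image_mset (\<kappa>'(a := c, b := c)) (mset_set (W - {a, b})) = image_mset \<kappa>' (mset_set (W - {a, b}))"
        by (rule img_cong) simp
      then show ?thesis using msW[OF ab(1,2)] ab(3) kp(3) by simp
    qed
    have Cc: "{u \<in> W. (\<kappa>'(a := c, b := c)) u = c} = {a, b}"
    proof (intro set_eqI iffI)
      fix u assume u: "u \<in> {u \<in> W. (\<kappa>'(a := c, b := c)) u = c}"
      show "u \<in> {a, b}"
      proof (rule ccontr)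
        assume "u \<notin> {a, b}"
        then have "\<kappa>' u = c" "\<kappa>' u \<in># A" using u inA by auto
        then show False using cA by simp
      qed
    next
      fix u assume "u \<in> {a, b}" then show "u \<in> {u \<in> W. (\<kappa>'(a := c, b := c)) u = c}" using ab by auto
    qed
    show ?thesis unfolding hk CS_def using P Pr Im Cc by simp
  qed
  have bij: "bij_betw h S (CS W E (add_mset c (add_mset c A)))"
    unfolding bij_betw_def
  proof
    show "inj_on h S"
    proof (rule inj_onI)
      fix p q assume p: "p \<in> S" and q: "q \<in> S" and e: "h p = h q"
      obtain a1 b1 k1 where p1: "p = ((a1, b1), k1)" by (metis prod.collapse)
      obtain a2 b2 k2 where q1: "q = ((a2, b2), k2)" by (metis prod.collapse)
      have m1: "(a1, b1) \<in> NE E W" "k1 \<in> CS (W - {a1, b1}) E A" using p p1 by (auto simp: S_def)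
      have m2: "(a2, b2) \<in> NE E W" "k2 \<in> CS (W - {a2, b2}) E A" using q q1 by (auto simp: S_def)
      have "{a1, b1} = {a2, b2}" using mem[OF m1] mem[OF m2] e p1 q1 by metis
      moreover have "a1 < b1" "a2 < b2" using m1 m2 by (auto simp: NE_def)
      ultimately have ab: "a1 = a2" "b1 = b2" by (metis doubleton_eq_iff not_less_iff_gr_or_eq)+
      have k1P: "k1 \<in> (W - {a1, b1}) \<rightarrow>\<^sub>E set_mset A" using m1 by (simp add: CS_def)
      have k2P: "k2 \<in> (W - {a2, b2}) \<rightarrow>\<^sub>E set_mset A" using m2 by (simp add: CS_def)
      have e': "k1(a1 := c, b1 := c) = k2(a1 := c, b1 := c)" using e p1 q1 ab by (simp add: h_def)
      have "k1 = k2"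
      proof
        fix x show "k1 x = k2 x"
        proof (cases "x \<in> {a1, b1}")
          case True
          then have "x \<notin> W - {a1, b1}" "x \<notin> W - {a2, b2}" using ab by auto
          then have "k1 x = undefined" "k2 x = undefined"
            using PiE_arb[OF k1P] PiE_arb[OF k2P] by blast+
          then show ?thesis by simp
        next
          case False
          then show ?thesis using fun_cong[OF e', of x] by simp
        qed
      qed
      then show "p = q" using p1 q1 ab by simp
    qed
  next
    show "h ` S = CS W E (add_mset c (add_mset c A))"
    proof (intro set_eqI iffI)
      fix k assume "k \<in> h ` S"
      then obtain p k' where "p \<in> NE E W" "k' \<in> CS (W - {fst p, snd p}) E A" "k = h (p, k')"
        by (auto simp: S_def)
      then show "k \<in> CS W E (add_mset c (add_mset c A))" using mem[of "fst p" "snd p" k'] by simp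
    next
      fix k assume k: "k \<in> CS W E (add_mset c (add_mset c A))"
      then have kp: "k \<in> W \<rightarrow>\<^sub>E set_mset (add_mset c (add_mset c A))" "proper_coloring W E k"
        "image_mset k (mset_set W) = add_mset c (add_mset c A)" by (auto simp: CS_def)
      have "card {u \<in> W. k u = c} = 2"
        using count_img[OF fW, of k c] kp(3) cA by (simp add: not_in_iff)
      then obtain x y where xy: "{u \<in> W. k u = c} = {x, y}" "x \<noteq> y" by (meson card_2_iff)
      define a where "a = min x y"
      define b where "b = max x y"
      have abxy: "{a, b} = {x, y}" "a < b" using xy(2) by (auto simp: a_def b_def min_def max_def)
      have abW: "a \<in> W" "b \<in> W" "k a = c" "k b = c" using xy(1) abxy(1) by (auto simp: set_eq_iff)
      have nE: "\<not> E a b"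
      proof
        assume "E a b"
        have pc: "\<forall>i\<in>W. \<forall>j\<in>W. E i j \<longrightarrow> k i \<noteq> k j" using kp(2) by (simp add: proper_coloring_def)
        have "k a \<noteq> k b" using bspec[OF bspec[OF pc abW(1)] abW(2)] \<open>E a b\<close> by simp
        then show False using abW(3,4) by simp
      qed
      have pNE: "(a, b) \<in> NE E W" using abW abxy nE by (simp add: NE_def)
      define k' where "k' = k(a := undefined, b := undefined)"
      have img: "image_mset k' (mset_set (W - {a, b})) = A"
      proof -
        have "image_mset k' (mset_set (W - {a, b})) = image_mset k (mset_set (W - {a, b}))"
          by (rule img_cong) (simp add: k'_def)
        moreover have "add_mset c (add_mset c A) = add_mset c (add_mset c (image_mset k (mset_set (W - {a, b}))))"
          using kp(3) msW[OF abW(1,2)] abxy(2) abW(3,4) by simp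
        ultimately show ?thesis by simp
      qed
      have "k' \<in> (W - {a, b}) \<rightarrow>\<^sub>E set_mset A"
      proof (rule PiE_I)
        fix u assume u: "u \<in> W - {a, b}"
        then have "k' u \<in># image_mset k' (mset_set (W - {a, b}))" using fW by simp
        then show "k' u \<in> set_mset A" using img by simp
      next
        fix u assume u: "u \<notin> W - {a, b}"
        show "k' u = undefined"
        proof (cases "u \<in> {a, b}")
          case True then show ?thesis by (auto simp: k'_def)
        next
          case False then have "u \<notin> W" using u by simp
          then show ?thesis using PiE_arb[OF kp(1)] False by (simp add: k'_def)
        qed
      qed
      moreover have "proper_coloring (W - {a, b}) E k'"
        using kp(2) by (auto simp: proper_coloring_def k'_def)
      ultimately have "k' \<in> CS (W - {a, b}) E A" using img by (simp add: CS_def)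
      then have Sm: "((a, b), k') \<in> S" unfolding S_def using pNE by simp
      have hk: "h ((a, b), k') = k"
      proof
        fix x show "h ((a, b), k') x = k x"
          using abW(3,4) by (cases "x = a"; cases "x = b") (simp_all add: h_def k'_def)
      qed
      from hk[symmetric] Sm show "k \<in> h ` S" by (rule image_eqI)
    qed
  qed
  have "(\<Sum>p\<in>NE E W. monom 1 (dg E W (fst p) + dg E W (snd p)) * chrom_qsf (W - {fst p, snd p}) E A)
      = (\<Sum>p\<in>NE E W. \<Sum>k\<in>CS (W - {fst p, snd p}) E A. monom 1 (dg E W (fst p) + dg E W (snd p) + asc (W - {fst p, snd p}) E k))"
    by (simp add: chrom_CS sum_distrib_left mult_monom)
  also have "\<dots> = (\<Sum>(p, k)\<in>S. monom 1 (dg E W (fst p) + dg E W (snd p) + asc (W - {fst p, snd p}) E k))"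
    unfolding S_def using fW by (intro sum.Sigma) (auto intro: finite_CS finite_NE)
  also have "\<dots> = (\<Sum>q\<in>S. monom 1 (asc W E (h q)))"
  proof (rule sum.cong[OF refl])
    fix q assume q: "q \<in> S"
    obtain a b k where qk: "q = ((a, b), k)" by (metis prod.collapse)
    have p: "(a, b) \<in> NE E W" and k: "k \<in> CS (W - {a, b}) E A" using q qk by (auto simp: S_def)
    have ab: "a \<in> W" "b \<in> W" "a < b" "\<not> E a b" using p by (auto simp: NE_def)
    have kP: "k \<in> (W - {a, b}) \<rightarrow>\<^sub>E set_mset A" using k by (simp add: CS_def)
    have lt2: "\<forall>u\<in>W - {a, b}. (k(a := c, b := c)) u < (k(a := c, b := c)) a"
      using PiE_mem[OF kP] lt ab(3) by simp
    have "asc W E (k(a := c, b := c)) = asc (W - {a, b}) E (k(a := c, b := c)) + dg E W a + dg E W b"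
      by (rule asc_add2[where E=E and \<kappa>="k(a := c, b := c)"]) (use fW ab lt2 in simp_all)
    also have "asc (W - {a, b}) E (k(a := c, b := c)) = asc (W - {a, b}) E k" by (rule asc_cong) simp
    finally have eq0: "asc W E (k(a := c, b := c)) = asc (W - {a, b}) E k + dg E W a + dg E W b" .
    then have eq: "asc W E (k(a := c, b := c)) = dg E W a + dg E W b + asc (W - {a, b}) E k" by linarith
    show "(case q of (p, k) \<Rightarrow> monom 1 (dg E W (fst p) + dg E W (snd p) + asc (W - {fst p, snd p}) E k)) = monom 1 (asc W E (h q))"
      unfolding qk h_def by (simp only: prod.case fst_conv snd_conv eq)
  qed
  also have "\<dots> = (\<Sum>k\<in>CS W E (add_mset c (add_mset c A)). monom 1 (asc W E k))"
    by (rule sum.reindex_bij_betw[OF bij])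
  finally show ?thesis by (simp add: chrom_CS)
qed

lemma single_alg:
  fixes C D :: "nat \<Rightarrow> int poly"
  assumes cA: "c \<notin># A" "c \<noteq> 0"
    and R: "\<And>j. D j = C j + C (Suc j) + (if Suc M = 2 * j + 2 then C (Suc j) else 0) - (if Suc M = 2 * j then C j else 0)"
  shows "(\<Sum>k\<le>Suc M. C k * G (Suc M - k) k (add_mset c A)) = (\<Sum>j\<le>M. D j * G (M - j) j A)"
proof -
  define g where "g j = G (M - j) j A" for j
  have S1: "(\<Sum>k\<le>Suc M. C k * (if k \<ge> 1 then G (Suc M - k) (k - 1) A else 0)) = (\<Sum>j\<le>M. C (Suc j) * g j)"
    by (subst sum.atMost_Suc_shift) (simp add: g_def)
  have S2: "(\<Sum>k\<le>Suc M. C k * (if Suc M - k \<ge> 1 then G (Suc M - k - 1) k A else 0)) = (\<Sum>j\<le>M. C j * g j)"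
  proof -
    have "(\<Sum>k\<le>Suc M. C k * (if Suc M - k \<ge> 1 then G (Suc M - k - 1) k A else 0))
        = (\<Sum>k\<le>M. C k * (if Suc M - k \<ge> 1 then G (Suc M - k - 1) k A else 0))"
      by (subst sum.atMost_Suc) simp
    also have "\<dots> = (\<Sum>j\<le>M. C j * g j)"
      by (intro sum.cong) (auto simp: g_def Suc_diff_le)
    finally show ?thesis .
  qed
  have LHS: "(\<Sum>k\<le>Suc M. C k * G (Suc M - k) k (add_mset c A)) = (\<Sum>j\<le>M. C (Suc j) * g j) + (\<Sum>j\<le>M. C j * g j)"
  proof -
    have "(\<Sum>k\<le>Suc M. C k * G (Suc M - k) k (add_mset c A))
       = (\<Sum>k\<le>Suc M. C k * (if k \<ge> 1 then G (Suc M - k) (k - 1) A else 0)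
          + C k * (if Suc M - k \<ge> 1 then G (Suc M - k - 1) k A else 0))"
      by (intro sum.cong) (simp_all add: G_single[OF cA] distrib_left)
    then show ?thesis using S1 S2 by (simp add: sum.distrib)
  qed
  define T1 where "T1 = (\<Sum>j\<le>M. (if Suc M = 2 * j + 2 then C (Suc j) else 0) * g j)"
  define T2 where "T2 = (\<Sum>j\<le>M. (if Suc M = 2 * j then C j else 0) * g j)"
  have T: "T1 = T2"
  proof -
    have "T2 = (\<Sum>j\<le>Suc M. (if Suc M = 2 * j then C j else 0) * g j)"
      unfolding T2_def by (subst sum.atMost_Suc) simp
    also have "\<dots> = (\<Sum>j\<le>M. (if Suc M = 2 * Suc j then C (Suc j) else 0) * g (Suc j))"
      by (subst sum.atMost_Suc_shift) simp
    also have "\<dots> = T1"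
      unfolding T1_def
    proof (intro sum.cong refl)
      fix j assume "j \<in> {..M}"
      show "(if Suc M = 2 * Suc j then C (Suc j) else 0) * g (Suc j) = (if Suc M = 2 * j + 2 then C (Suc j) else 0) * g j"
      proof (cases "Suc M = 2 * j + 2")
        case True
        then have "M - Suc j = j" "M - j = Suc j" by auto
        then show ?thesis using True G_sym by (simp add: g_def)
      qed simp
    qed
    finally show ?thesis by simp
  qed
  have "(\<Sum>j\<le>M. D j * G (M - j) j A) = (\<Sum>j\<le>M. C j * g j + C (Suc j) * g j
      + (if Suc M = 2 * j + 2 then C (Suc j) else 0) * g j - (if Suc M = 2 * j then C j else 0) * g j)"
    by (intro sum.cong) (simp_all add: R g_def algebra_simps)
  also have "\<dots> = (\<Sum>j\<le>M. C j * g j) + (\<Sum>j\<le>M. C (Suc j) * g j) + T1 - T2"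
    by (simp add: T1_def T2_def sum.distrib sum_subtractf)
  finally show ?thesis using LHS T by simp
qed

lemma double_alg:
  fixes C :: "nat \<Rightarrow> int poly"
  assumes cA: "c \<notin># A" "c \<noteq> 0"
  shows "(\<Sum>k\<le>Suc (Suc M). C k * G (Suc (Suc M) - k) k (add_mset c (add_mset c A))) = (\<Sum>j\<le>M. C (Suc j) * G (M - j) j A)"
proof -
  have "(\<Sum>k\<le>Suc (Suc M). C k * G (Suc (Suc M) - k) k (add_mset c (add_mset c A)))
      = (\<Sum>k\<le>Suc (Suc M). C k * (if Suc (Suc M) - k \<ge> 1 \<and> k \<ge> 1 then G (Suc (Suc M) - k - 1) (k - 1) A else 0))"
    by (intro sum.cong) (simp_all add: G_double[OF cA])
  also have "\<dots> = (\<Sum>j\<le>Suc M. C (Suc j) * (if Suc M - j \<ge> 1 then G (Suc M - j - 1) j A else 0))"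
  proof -
    let ?f = "\<lambda>k. C k * (if Suc (Suc M) - k \<ge> 1 \<and> k \<ge> 1 then G (Suc (Suc M) - k - 1) (k - 1) A else 0)"
    have s1: "sum ?f {..Suc (Suc M)} = ?f 0 + (\<Sum>j\<le>Suc M. ?f (Suc j))" by (rule sum.atMost_Suc_shift)
    have s2: "?f 0 = 0" by simp
    have s3: "(\<Sum>j\<le>Suc M. ?f (Suc j)) = (\<Sum>j\<le>Suc M. C (Suc j) * (if Suc M - j \<ge> 1 then G (Suc M - j - 1) j A else 0))"
      by (intro sum.cong refl) simp
    show ?thesis using s1 s2 s3 by (simp only: add_0_left)
  qed
  also have "\<dots> = (\<Sum>j\<le>M. C (Suc j) * (if Suc M - j \<ge> 1 then G (Suc M - j - 1) j A else 0))"
    by (subst sum.atMost_Suc) simp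
  also have "\<dots> = (\<Sum>j\<le>M. C (Suc j) * G (M - j) j A)"
    by (intro sum.cong) (auto simp: Suc_diff_le)
  finally show ?thesis .
qed

context cob
begin

lemma X_three:
  assumes W: "W \<subseteq> V" and c3: "count \<alpha> c \<ge> 3"
  shows "chrom_qsf W adj \<alpha> = 0"
proof -
  have fW: "finite W" using W finV finite_subset by blast
  have "CS W adj \<alpha> = {}"
  proof (rule ccontr)
    assume "CS W adj \<alpha> \<noteq> {}"
    then obtain k where k: "proper_coloring W adj k" "image_mset k (mset_set W) = \<alpha>" by (auto simp: CS_def)
    have "card {u \<in> W. k u = c} \<ge> 3" using count_img[OF fW, of k c] k(2) c3 by simp
    then obtain T where T: "T \<subseteq> {u \<in> W. k u = c}" "card T = 3" by (meson obtain_subset_with_card_n)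
    then obtain x y z where xyz: "T = {x, y, z}" "x \<noteq> y" "y \<noteq> z" "x \<noteq> z" by (auto simp: card_3_iff)
    have in3: "x \<in> W" "y \<in> W" "z \<in> W" "k x = c" "k y = c" "k z = c" using T(1) xyz(1) by auto
    have pc: "\<forall>i\<in>W. \<forall>j\<in>W. adj i j \<longrightarrow> k i \<noteq> k j" using k(1) by (simp add: proper_coloring_def)
    have "\<not> adj x y" using bspec[OF bspec[OF pc in3(1)] in3(2)] in3 by auto
    moreover have "\<not> adj x z" using bspec[OF bspec[OF pc in3(1)] in3(3)] in3 by auto
    moreover have "\<not> adj y z" using bspec[OF bspec[OF pc in3(2)] in3(3)] in3 by auto
    ultimately show False using P2[of x y z] in3 W xyz by auto
  qed
  then show ?thesis by (simp add: chrom_CS)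
qed

lemma R1full:
  assumes "W \<subseteq> V" "W \<noteq> {}"
  shows "D adj k W = Cf adj k W + Cf adj (Suc k) W + (if card W = 2 * k + 2 then Cf adj (Suc k) W else 0)
     - (if card W = 2 * k then Cf adj k W else 0)"
proof -
  have fW: "finite W" using assms finV finite_subset by blast
  show ?thesis
  proof (cases "2 * k + 1 \<le> card W")
    case True
    then show ?thesis using R1[OF assms True] by simp
  next
    case False
    have "D adj k W = 0" using D_vanish[OF fW] False by simp
    moreover have "Cf adj (Suc k) W = 0" by (rule Cf_vanish[OF fW]) (use False in simp)
    moreover have "card W \<noteq> 2 * k \<Longrightarrow> Cf adj k W = 0" by (rule Cf_vanish[OF fW]) (use False in simp)
    ultimately show ?thesis by auto
  qed
qed

theorem main:
  assumes "W \<subseteq> V"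
  shows "chrom_qsf W adj \<alpha> = (\<Sum>k\<le>card W. Cf adj k W * G (card W - k) k \<alpha>)"
  using assms
proof (induction "card W" arbitrary: W \<alpha> rule: less_induct)
  case less
  have fW: "finite W" using less.prems finV finite_subset by blast
  have irr': "\<forall>x. \<not> adj x x" using irr by simp
  have sym': "\<forall>x y. adj x y = adj y x" using sym by simp
  show ?case
  proof (cases "size \<alpha> = card W")
    case False
    have "chrom_qsf W adj \<alpha> = 0" using X_size[OF fW False] .
    moreover have "(\<Sum>k\<le>card W. Cf adj k W * G (card W - k) k \<alpha>) = 0"
      by (rule sum.neutral) (use False in \<open>auto intro!: G_size\<close>)
    ultimately show ?thesis by simp
  next
    case sz: True
    show ?thesis
    proof (cases "0 \<in># \<alpha>")
      case True
      then show ?thesis by (simp add: X_zero G_zero)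
    next
      case n0: False
      show ?thesis
      proof (cases "\<alpha> = {#}")
        case True
        then have "W = {}" using sz fW by simp
        then show ?thesis using True by (simp add: X_empty G_empty Q_empty)
      next
        case ne: False
        define c where "c = Max (set_mset \<alpha>)"
        have cin: "c \<in># \<alpha>" using ne by (simp add: c_def)
        have cmax: "\<forall>x\<in>#\<alpha>. x \<le> c" by (simp add: c_def)
        have c0: "0 < c" using cin n0 by (metis gr0I)
        have cnt1: "count \<alpha> c \<ge> 1" using cin by (simp add: Suc_le_eq)
        consider (one) "count \<alpha> c = 1" | (two) "count \<alpha> c = 2" | (three) "count \<alpha> c \<ge> 3" using cnt1 by linarith
        then show ?thesis
        proof cases
          case three
          then show ?thesis using X_three[OF less.prems three] G_three[OF three] by simp
        next
          case one
          define A where "A = \<alpha> - {#c#}"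
          have aA: "\<alpha> = add_mset c A" using cin by (simp add: A_def)
          have cA: "c \<notin># A" using one by (simp add: A_def not_in_iff)
          have ltA: "\<forall>x\<in>#A. x < c"
          proof
            fix x assume x: "x \<in># A"
            then have "x \<in># \<alpha>" "x \<noteq> c" using aA cA by auto
            then show "x < c" using cmax by force
          qed
          obtain M where M: "card W = Suc M" using sz aA by (metis size_add_mset)
          have Wne: "W \<noteq> {}" using M by auto
          have cardv: "\<And>v. v \<in> W \<Longrightarrow> card (W - {v}) = M" using M fW by simp
          have "chrom_qsf W adj \<alpha> = (\<Sum>v\<in>W. monom 1 (dg adj W v) * chrom_qsf (W - {v}) adj A)"
            unfolding aA by (rule X1[where E=adj, OF fW cA ltA c0 irr'])
          also have "\<dots> = (\<Sum>v\<in>W. monom 1 (dg adj W v) * (\<Sum>j\<le>M. Cf adj j (W - {v}) * G (M - j) j A))"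
          proof (rule sum.cong[OF refl])
            fix v assume v: "v \<in> W"
            have "card (W - {v}) < card W" using v fW by (simp add: card_gt_0_iff M)
            then have "chrom_qsf (W - {v}) adj A = (\<Sum>k\<le>card (W - {v}). Cf adj k (W - {v}) * G (card (W - {v}) - k) k A)"
              using less.hyps[of "W - {v}"] less.prems by auto
            then show "monom 1 (dg adj W v) * chrom_qsf (W - {v}) adj A = monom 1 (dg adj W v) * (\<Sum>j\<le>M. Cf adj j (W - {v}) * G (M - j) j A)"
              using cardv[OF v] by simp
          qed
          also have "\<dots> = (\<Sum>j\<le>M. D adj j W * G (M - j) j A)"
            by (simp add: D_def sum_distrib_left sum_distrib_right sum.swap[of _ W] mult.assoc)
          also have "\<dots> = (\<Sum>k\<le>Suc M. Cf adj k W * G (Suc M - k) k (add_mset c A))"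
          proof (rule single_alg[symmetric])
            show "c \<notin># A" "c \<noteq> 0" using cA c0 by auto
          next
            fix j show "D adj j W = Cf adj j W + Cf adj (Suc j) W + (if Suc M = 2 * j + 2 then Cf adj (Suc j) W else 0)
                - (if Suc M = 2 * j then Cf adj j W else 0)"
              using R1full[OF less.prems Wne, of j] M by simp
          qed
          finally show ?thesis using aA M by simp
        next
          case two
          define A where "A = \<alpha> - {#c#} - {#c#}"
          have c1: "c \<in># \<alpha> - {#c#}" using two by (simp add: in_diff_count)
          have aA: "\<alpha> = add_mset c (add_mset c A)"
          proof (rule multiset_eqI)
            fix x show "count \<alpha> x = count (add_mset c (add_mset c A)) x"
              using two by (cases "x = c") (auto simp: A_def)
          qed
          have cA: "c \<notin># A" using two by (simp add: A_def not_in_iff)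
          have ltA: "\<forall>x\<in>#A. x < c"
          proof
            fix x assume x: "x \<in># A"
            then have "x \<in># \<alpha>" "x \<noteq> c" using aA cA by auto
            then show "x < c" using cmax by force
          qed
          obtain M where M: "card W = Suc (Suc M)" using sz aA by (metis size_add_mset)
          have cardp: "\<And>p. p \<in> NE adj W \<Longrightarrow> card (W - {fst p, snd p}) = M"
            using M fW by (auto simp: NE_def card_Diff_subset)
          have "chrom_qsf W adj \<alpha> = (\<Sum>p\<in>NE adj W. monom 1 (dg adj W (fst p) + dg adj W (snd p)) * chrom_qsf (W - {fst p, snd p}) adj A)"
            unfolding aA by (rule X2[where E=adj, OF fW cA ltA c0 irr' sym'])
          also have "\<dots> = (\<Sum>p\<in>NE adj W. monom 1 (dg adj W (fst p) + dg adj W (snd p)) * (\<Sum>j\<le>M. Cf adj j (W - {fst p, snd p}) * G (M - j) j A))"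
          proof (rule sum.cong[OF refl])
            fix p assume p: "p \<in> NE adj W"
            have "card (W - {fst p, snd p}) < card W" using cardp[OF p] M by simp
            then have "chrom_qsf (W - {fst p, snd p}) adj A = (\<Sum>k\<le>card (W - {fst p, snd p}). Cf adj k (W - {fst p, snd p}) * G (card (W - {fst p, snd p}) - k) k A)"
              using less.hyps[of "W - {fst p, snd p}"] less.prems by auto
            then show "monom 1 (dg adj W (fst p) + dg adj W (snd p)) * chrom_qsf (W - {fst p, snd p}) adj A
                = monom 1 (dg adj W (fst p) + dg adj W (snd p)) * (\<Sum>j\<le>M. Cf adj j (W - {fst p, snd p}) * G (M - j) j A)"
              using cardp[OF p] by simp
          qed
          also have "\<dots> = (\<Sum>j\<le>M. Cf adj (Suc j) W * G (M - j) j A)"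
            by (simp add: sum_distrib_left sum_distrib_right sum.swap[of _ "NE adj W"] mult.assoc)
          also have "\<dots> = (\<Sum>k\<le>Suc (Suc M). Cf adj k W * G (Suc (Suc M) - k) k (add_mset c (add_mset c A)))"
            by (rule double_alg[symmetric]) (use cA c0 in auto)
          finally show ?thesis using aA M by simp
        qed
      qed
    qed
  qed
qed

end

definition nn :: "int poly \<Rightarrow> bool" where "nn p = (\<forall>i. 0 \<le> coeff p i)"

lemma nn_add: "nn p \<Longrightarrow> nn q \<Longrightarrow> nn (p + q)"
  by (simp add: nn_def)

lemma nn_mult: "nn p \<Longrightarrow> nn q \<Longrightarrow> nn (p * q)"
  unfolding nn_def coeff_mult by (auto intro!: sum_nonneg mult_nonneg_nonneg)

lemma nn_monom: "nn (monom 1 k)"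
  by (simp add: nn_def coeff_monom)

lemma nn_one: "nn 1"
  by (simp add: nn_def coeff_1)

lemma nn_zero: "nn 0"
  by (simp add: nn_def)

lemma nn_sum: "(\<And>x. x \<in> A \<Longrightarrow> nn (f x)) \<Longrightarrow> nn (sum f A)"
  unfolding nn_def coeff_sum by (auto intro!: sum_nonneg)

lemma nn_Qf: "nn (Qf adj n W x)"
proof (induction n arbitrary: W x)
  case 0 then show ?case by (simp add: nn_one)
next
  case (Suc n) then show ?case by (simp add: nn_sum nn_mult nn_monom)
qed

lemma nn_Cf: "nn (Cf adj k W)"
proof (induction k arbitrary: W)
  case 0 then show ?case by (simp add: Q_def nn_Qf)
next
  case (Suc k) then show ?case by (simp add: nn_sum nn_mult nn_monom)
qed

lemma qsf_mult_one: "qsf_mult f qsf_one \<alpha> = f \<alpha>"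
proof -
  have "qsf_mult f qsf_one \<alpha> = (\<Sum>\<beta>\<in>{\<beta>. \<beta> \<subseteq># \<alpha>}. if \<beta> = \<alpha> then f \<beta> else 0)"
    unfolding qsf_mult_def qsf_one_def
  proof (intro sum.cong refl)
    fix \<beta> assume "\<beta> \<in> {\<beta>. \<beta> \<subseteq># \<alpha>}"
    then have "\<beta> \<subseteq># \<alpha>" by simp
    then have da: "(\<alpha> - \<beta>) + \<beta> = \<alpha>" by (rule subset_mset.diff_add)
    have "(\<alpha> - \<beta> = {#}) = (\<beta> = \<alpha>)"
    proof
      assume "\<alpha> - \<beta> = {#}" then show "\<beta> = \<alpha>" using da by simp
    next
      assume "\<beta> = \<alpha>" then show "\<alpha> - \<beta> = {#}" by simp
    qed
    then show "f \<beta> * (if \<alpha> - \<beta> = {#} then 1 else 0) = (if \<beta> = \<alpha> then f \<beta> else 0)" by simp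
  qed
  also have "\<dots> = f \<alpha>" by (simp add: finite_subs)
  finally show ?thesis .
qed

lemma elem_sym_0: "elem_sym 0 = qsf_one"
  by (rule ext) (simp add: elem_sym_def qsf_one_def)

lemma esp_two: "elem_sym_part [a, b] \<alpha> = G a b \<alpha>"
proof -
  have "qsf_mult (elem_sym b) qsf_one = elem_sym b" by (rule ext) (rule qsf_mult_one)
  then show ?thesis by (simp add: elem_sym_part_def G_def)
qed

lemma esp_one: "elem_sym_part [a] \<alpha> = G a 0 \<alpha>"
proof -
  have "elem_sym_part [a] \<alpha> = qsf_mult (elem_sym a) qsf_one \<alpha>" by (simp add: elem_sym_part_def)
  also have "\<dots> = elem_sym a \<alpha>" by (rule qsf_mult_one)
  also have "\<dots> = qsf_mult (elem_sym a) (elem_sym 0) \<alpha>" unfolding elem_sym_0 by (rule qsf_mult_one[symmetric])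
  finally show ?thesis by (simp add: G_def)
qed

lemma esp_nil: "elem_sym_part [] \<alpha> = G 0 0 \<alpha>"
proof -
  have "G 0 0 \<alpha> = qsf_mult qsf_one qsf_one \<alpha>" by (simp add: G_def elem_sym_0)
  also have "\<dots> = qsf_one \<alpha>" by (rule qsf_mult_one)
  finally show ?thesis by (simp add: elem_sym_part_def)
qed

lemma length_le_sum: "0 \<notin> set (xs :: nat list) \<Longrightarrow> length xs \<le> sum_list xs"
  by (induction xs) auto

lemma finite_partitions: "finite (partitions n)"
proof (rule finite_subset)
  show "partitions n \<subseteq> {xs. set xs \<subseteq> {0..n} \<and> length xs \<le> n}"
  proof
    fix xs assume "xs \<in> partitions n"
    then have xs: "sum_list xs = n" "0 \<notin> set xs" by (auto simp: partitions_def)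
    have "set xs \<subseteq> {0..n}" using xs(1) member_le_sum_list by fastforce
    moreover have "length xs \<le> n" using length_le_sum[OF xs(2)] xs(1) by simp
    ultimately show "xs \<in> {xs. set xs \<subseteq> {0..n} \<and> length xs \<le> n}" by simp
  qed
  show "finite {xs. set xs \<subseteq> {0..n} \<and> length xs \<le> n}" by (rule finite_lists_length_le) simp
qed

lemma nuio_mono:
  assumes "nuio n m" "1 \<le> a" "a \<le> b" "b \<le> n - 1"
  shows "m a \<le> m b"
  using assms(3,4)
proof (induction b rule: dec_induct)
  case base then show ?case by simp
next
  case (step k)
  then have "m a \<le> m k" by simp
  moreover have "m k \<le> m (k + 1)" using assms(1,2) step by (simp add: nuio_def)
  ultimately show ?case by simp
qed

theorem corollary3p5:
  fixes n r :: nat and m :: "nat \<Rightarrow> nat"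
  assumes "nuio n m"
    and "r \<le> n"
    and "\<forall>i j. 1 \<le> i \<and> i < j \<and> j \<le> r \<longrightarrow> inc_adj m i j"
    and "\<forall>i j. r + 1 \<le> i \<and> i < j \<and> j \<le> n \<longrightarrow> inc_adj m i j"
  shows "e_positive n (chrom_qsf {1..n} (inc_adj m))"
proof -
  have symm: "\<And>a b. inc_adj m a b = inc_adj m b a" by (auto simp: inc_adj_def)
  interpret cob "inc_adj m" "{1..n}"
  proof
    show "finite {1..n}" by simp
    show "\<And>a b. inc_adj m a b = inc_adj m b a" by (rule symm)
    show "\<And>a. \<not> inc_adj m a a" by (simp add: inc_adj_def)
  next
    fix a b c assume h: "a \<in> {1..n}" "b \<in> {1..n}" "c \<in> {1..n}" "a < b" "b < c" "inc_adj m a c"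
    then have cm: "c \<le> m a" by (auto simp: inc_adj_def)
    have "m a \<le> m b" using nuio_mono[OF assms(1), of a b] h by auto
    then show "inc_adj m a b \<and> inc_adj m b c" using h cm by (auto simp: inc_adj_def)
  next
    fix a b c assume h: "a \<in> {1..n}" "b \<in> {1..n}" "c \<in> {1..n}" "a \<noteq> b" "a \<noteq> c" "b \<noteq> c"
    have key: "inc_adj m x y" if "x \<in> {1..n}" "y \<in> {1..n}" "x \<noteq> y" "(x \<le> r) = (y \<le> r)" for x y
    proof (cases "x < y")
      case True
      then show ?thesis using that assms(3,4) by (cases "x \<le> r") auto
    next
      case False
      then have "y < x" using that by simp
      then have "inc_adj m y x" using that assms(3,4) by (cases "y \<le> r") auto
      then show ?thesis using symm by simp
    qed
    show "inc_adj m a b \<or> inc_adj m a c \<or> inc_adj m b c"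
      using key[of a b] key[of a c] key[of b c] h by blast
  qed
  define Cn where "Cn k = Cf (inc_adj m) k {1..n}" for k
  have mainn: "chrom_qsf {1..n} (inc_adj m) \<alpha> = (\<Sum>k\<le>n. Cn k * G (n - k) k \<alpha>)" for \<alpha>
    using main[of "{1..n}" \<alpha>] by (simp add: Cn_def)
  define lamk where "lamk k = (if k = 0 then (if n = 0 then [] else [n]) else [n - k, k])" for k
  define K where "K = {k. 2 * k \<le> n}"
  define sec where "sec lam = (if length lam \<ge> 2 then lam ! 1 else 0)" for lam :: "nat list"
  define Cfin where "Cfin lam = (if lam \<in> lamk ` K then Cn (sec lam) else 0)" for lam
  have sec_lamk: "sec (lamk k) = k" for k by (simp add: sec_def lamk_def)
  have inj: "inj_on lamk K" by (rule inj_on_inverseI[of _ sec]) (simp add: sec_lamk)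
  have lamk_part: "lamk k \<in> partitions n" if "k \<in> K" for k
    using that by (auto simp: lamk_def K_def partitions_def)
  have esp: "elem_sym_part (lamk k) \<alpha> = G (n - k) k \<alpha>" for k \<alpha>
    by (simp add: lamk_def esp_two esp_one esp_nil)
  have Cvan: "Cn k = 0" if "k \<notin> K" for k
    unfolding Cn_def by (rule Cf_vanish) (use that in \<open>auto simp: K_def\<close>)
  show ?thesis
    unfolding e_positive_def
  proof (intro exI[of _ Cfin] conjI)
    show "\<forall>lam\<in>partitions n. \<forall>i. 0 \<le> coeff (Cfin lam) i"
      using nn_Cf by (auto simp: Cfin_def Cn_def nn_def)
    show "chrom_qsf {1..n} (inc_adj m) = (\<lambda>\<alpha>. \<Sum>lam\<in>partitions n. Cfin lam * elem_sym_part lam \<alpha>)"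
    proof
      fix \<alpha>
      have "(\<Sum>lam\<in>partitions n. Cfin lam * elem_sym_part lam \<alpha>) = (\<Sum>lam\<in>lamk ` K. Cfin lam * elem_sym_part lam \<alpha>)"
        by (rule sum.mono_neutral_right) (auto simp: finite_partitions lamk_part Cfin_def)
      also have "\<dots> = (\<Sum>k\<in>K. Cfin (lamk k) * elem_sym_part (lamk k) \<alpha>)"
        using sum.reindex[OF inj, of "\<lambda>lam. Cfin lam * elem_sym_part lam \<alpha>"] by (simp add: comp_def)
      also have "\<dots> = (\<Sum>k\<in>K. Cn k * G (n - k) k \<alpha>)"
        by (intro sum.cong refl) (simp add: Cfin_def sec_lamk esp)
      also have "\<dots> = (\<Sum>k\<le>n. Cn k * G (n - k) k \<alpha>)"
        by (rule sum.mono_neutral_left) (auto simp: K_def Cvan)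
      finally show "chrom_qsf {1..n} (inc_adj m) \<alpha> = (\<Sum>lam\<in>partitions n. Cfin lam * elem_sym_part lam \<alpha>)"
        using mainn by simp
    qed
  qed
qed


end
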